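(* Let $\alpha\approx 2.956$ be Otter's tree constant. Fix $0<\varepsilon<\alpha$. There exist $\Delta=\Delta(\varepsilon)\in\mathbb N$ and $\rho=\rho(\varepsilon)>0$ such that, for all sufficiently large $n$, the number of pairwise non-isomorphic trees on $n$ vertices with maximum degree at most $\Delta$ and at least $\rho n$ leaves is at least $(\alpha-\varepsilon)^n$.
   Context: Otter's tree constant $\alpha$ is the constant such that the number of pairwise non-isomorphic unlabelled trees on $n$ vertices is $(1+o(1))Cn^{-5/2}\alpha^n$ for an absolute constant $C$; equivalently, the number $a_k$ of non-isomorphic rooted unlabelled trees on $k$ vertices satisfies $a_k=(1+o(1))C'k^{-3/2}\alpha^k$, so $a_k^{1/k}\to\alpha$. Trees are counted up to graph isomorphism (unlabelled). *)

theory Defs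
  imports Complex_Main
begin

text \<open>Simple graphs on the vertex set {0..<n}, given by a set of 2-element edges.\<close>

definition vpairs :: "nat \<Rightarrow> nat set set" where
  "vpairs n = {{u, v} | u v. u < n \<and> v < n \<and> u \<noteq> v}"

definition connected_on :: "nat \<Rightarrow> nat set set \<Rightarrow> bool" where
  "connected_on n E \<longleftrightarrow>
     (\<forall>u<n. \<forall>v<n. (u, v) \<in> {(x, y). {x, y} \<in> E}\<^sup>*)"

text \<open>A tree: a connected graph on at least one vertex in which every edge is a bridge
  (i.e. a minimally connected graph, equivalently connected and acyclic).\<close>
definition is_tree :: "nat \<Rightarrow> nat set set \<Rightarrow> bool" where
  "is_tree n E \<longleftrightarrow> 1 \<le> n \<and> E \<subseteq> vpairs n \<and> connected_on n E \<and>
     (\<forall>e\<in>E. \<not> connected_on n (E - {e}))"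

definition degree :: "nat set set \<Rightarrow> nat \<Rightarrow> nat" where
  "degree E v = card {e\<in>E. v \<in> e}"

definition leaves :: "nat \<Rightarrow> nat set set \<Rightarrow> nat set" where
  "leaves n E = {v. v < n \<and> degree E v = 1}"

definition max_degree :: "nat \<Rightarrow> nat set set \<Rightarrow> nat" where
  "max_degree n E = Max (degree E ` {..<n})"

definition graph_iso :: "nat \<Rightarrow> nat set set set \<Rightarrow> (nat set set \<times> nat set set) set" where
  "graph_iso n A = {(E, E'). E \<in> A \<and> E' \<in> A \<and>
     (\<exists>f. bij_betw f {..<n} {..<n} \<and> E' = (\<lambda>e. f ` e) ` E)}"

definition unlabelled_trees :: "nat \<Rightarrow> (nat set set \<Rightarrow> bool) \<Rightarrow> nat" where
  "unlabelled_trees n P =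
     (let A = {E. is_tree n E \<and> P E} in card (A // graph_iso n A))"

definition rooted_iso :: "nat \<Rightarrow> (nat set set \<times> nat) set \<Rightarrow> ((nat set set \<times> nat) \<times> (nat set set \<times> nat)) set" where
  "rooted_iso n A = {((E, r), (E', r')). (E, r) \<in> A \<and> (E', r') \<in> A \<and>
     (\<exists>f. bij_betw f {..<n} {..<n} \<and> E' = (\<lambda>e. f ` e) ` E \<and> f r = r')}"

definition rooted_trees :: "nat \<Rightarrow> nat" where
  "rooted_trees k =
     (let A = {(E, r). is_tree k E \<and> r < k} in card (A // rooted_iso k A))"

end

theory Submission
  imports Defs
begin


definition relabel :: "('a \<Rightarrow> 'b) \<Rightarrow> 'a set set \<Rightarrow> 'b set set" where
  "relabel f E = (\<lambda>e. f ` e) ` E"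

definition adjs :: "'a set set \<Rightarrow> 'a set \<Rightarrow> ('a \<times> 'a) set" where
  "adjs E X = {(x, y). {x, y} \<in> E \<and> x \<notin> X \<and> y \<notin> X}"

abbreviation rch :: "'a set set \<Rightarrow> 'a set \<Rightarrow> ('a \<times> 'a) set" where
  "rch E X \<equiv> (adjs E X)\<^sup>*"

definition cmp :: "'a set set \<Rightarrow> 'a \<Rightarrow> 'a \<Rightarrow> 'a set" where
  "cmp E v x = {y. (x, y) \<in> rch E {v}}"

definition dg :: "'a set set \<Rightarrow> 'a \<Rightarrow> nat" where
  "dg E v = card {e\<in>E. v \<in> e}"

definition conn :: "'a set \<Rightarrow> 'a set set \<Rightarrow> bool" where
  "conn W E \<longleftrightarrow> (\<forall>u\<in>W. \<forall>v\<in>W. (u, v) \<in> rch E {})"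

definition edges_in :: "'a set \<Rightarrow> 'a set set \<Rightarrow> bool" where
  "edges_in W E \<longleftrightarrow> (\<forall>e\<in>E. \<exists>a b. a \<in> W \<and> b \<in> W \<and> a \<noteq> b \<and> e = {a, b})"

definition spn :: "'a set \<Rightarrow> nat \<Rightarrow> 'a set set \<Rightarrow> 'a \<Rightarrow> bool" where
  "spn W k E v \<longleftrightarrow> v \<in> W \<and> (\<exists>x\<in>W. \<exists>y\<in>W. x \<noteq> v \<and> y \<noteq> v \<and> k \<le> card (cmp E v x) \<and>
      k \<le> card (cmp E v y) \<and> (x, y) \<notin> rch E {v})"

lemma adjs_sym: "(x, y) \<in> adjs E X \<Longrightarrow> (y, x) \<in> adjs E X"
  unfolding adjs_def by (auto simp: insert_commute)

lemma rch_sym: "(x, y) \<in> rch E X \<Longrightarrow> (y, x) \<in> rch E X"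
proof (induction rule: rtrancl_induct)
  case base then show ?case by simp
next
  case (step y z)
  then show ?case using adjs_sym by (meson converse_rtrancl_into_rtrancl)
qed

lemma rch_edge: "{x, y} \<in> E \<Longrightarrow> x \<notin> X \<Longrightarrow> y \<notin> X \<Longrightarrow> (x, y) \<in> rch E X"
  unfolding adjs_def by auto

lemma rtrancl_map_lemma:
  assumes "(x, y) \<in> R\<^sup>*" and "\<And>a b. (a, b) \<in> R \<Longrightarrow> (f a, f b) \<in> S"
  shows "(f x, f y) \<in> S\<^sup>*"
  using assms(1)
proof (induction rule: rtrancl_induct)
  case base then show ?case by simp
next
  case (step y z) then show ?case using assms(2) by (meson rtrancl.rtrancl_into_rtrancl)
qed

lemma closure_lemma:
  assumes "(x, y) \<in> R\<^sup>*" "x \<in> L" "\<And>a b. (a, b) \<in> R \<Longrightarrow> a \<in> L \<Longrightarrow> b \<in> L"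
  shows "y \<in> L"
  using assms(1) by (induction rule: rtrancl_induct) (use assms in auto)

lemma rch_endpoint:
  assumes "(x, y) \<in> rch E X" "edges_in W E"
  shows "y = x \<or> y \<in> W"
  using assms(1)
proof (induction rule: rtrancl_induct)
  case base then show ?case by simp
next
  case (step y z)
  then have "{y, z} \<in> E" by (auto simp: adjs_def)
  with assms(2) obtain a b where "a \<in> W" "b \<in> W" "{y, z} = {a, b}"
    unfolding edges_in_def by blast
  then have "z \<in> {a, b}" by (metis insertI1 insert_commute)
  then show ?case using \<open>a \<in> W\<close> \<open>b \<in> W\<close> by blast
qed

lemma rch_into_X:
  assumes "(x, y) \<in> rch E X" "y \<in> X"
  shows "x = y"
  using assms by (induction rule: converse_rtrancl_induct) (auto simp: adjs_def)

lemma cmp_subset: "edges_in W E \<Longrightarrow> cmp E v x \<subseteq> insert x W"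
  unfolding cmp_def using rch_endpoint by fastforce

lemma conn_alt: "connected_on n E \<longleftrightarrow> conn {..<n} E"
  unfolding connected_on_def conn_def adjs_def Ball_def lessThan_iff by simp

lemma degree_dg: "degree E v = dg E v"
  unfolding degree_def dg_def by simp

lemma dg_nbrs:
  assumes "\<forall>e\<in>E. \<exists>a b. e = {a, b}"
  shows "dg E v = card {u. {v, u} \<in> E}"
proof -
  have "bij_betw (\<lambda>u. {v, u}) {u. {v, u} \<in> E} {e\<in>E. v \<in> e}"
  proof (rule bij_betwI')
    fix x y assume "x \<in> {u. {v, u} \<in> E}" "y \<in> {u. {v, u} \<in> E}"
    show "({v, x} = {v, y}) = (x = y)" by (metis doubleton_eq_iff)
  next
    fix x assume "x \<in> {u. {v, u} \<in> E}" then show "{v, x} \<in> {e \<in> E. v \<in> e}" by simp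
  next
    fix e assume e: "e \<in> {e \<in> E. v \<in> e}"
    then obtain a b where "e = {a, b}" using assms by blast
    with e have "v = a \<or> v = b" by blast
    then show "\<exists>x\<in>{u. {v, u} \<in> E}. e = {v, x}"
    proof
      assume "v = a" then show ?thesis using e \<open>e = {a, b}\<close> by blast
    next
      assume "v = b" then have "e = {v, a}" using \<open>e = {a, b}\<close> by (simp add: insert_commute)
      then show ?thesis using e by blast
    qed
  qed
  then show ?thesis unfolding dg_def by (simp add: bij_betw_same_card)
qed

section \<open>Transport along injective relabelling\<close>

lemma relabel_mem: "e \<in> E \<Longrightarrow> f ` e \<in> relabel f E"
  unfolding relabel_def by simp

lemma relabel_comp: "relabel g (relabel f E) = relabel (g \<circ> f) E"
  unfolding relabel_def by (auto simp: image_comp)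

lemma relabel_cong: "(\<And>e x. e \<in> E \<Longrightarrow> x \<in> e \<Longrightarrow> f x = g x) \<Longrightarrow> relabel f E = relabel g E"
  unfolding relabel_def by (rule image_cong) (simp_all cong: image_cong)

lemma relabel_id: "relabel id E = E"
  unfolding relabel_def by simp

lemma edges_in_relabel:
  assumes "inj_on f W" "edges_in W E"
  shows "edges_in (f ` W) (relabel f E)"
  unfolding edges_in_def
proof
  fix e' assume "e' \<in> relabel f E"
  then obtain e where e: "e \<in> E" "e' = f ` e" unfolding relabel_def by blast
  then obtain a b where ab: "a \<in> W" "b \<in> W" "a \<noteq> b" "e = {a, b}"
    using assms(2) unfolding edges_in_def by blast
  then have "f a \<noteq> f b" using assms(1) by (meson inj_onD)
  then show "\<exists>a b. a \<in> f ` W \<and> b \<in> f ` W \<and> a \<noteq> b \<and> e' = {a, b}"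
    using ab e by blast
qed

lemma relabel_edge_iff:
  assumes "inj_on f W" "edges_in W E" "a \<in> W" "b \<in> W"
  shows "{f a, f b} \<in> relabel f E \<longleftrightarrow> {a, b} \<in> E"
proof
  assume "{a, b} \<in> E" then show "{f a, f b} \<in> relabel f E"
    unfolding relabel_def by (metis image_empty image_eqI image_insert)
next
  assume "{f a, f b} \<in> relabel f E"
  then obtain e where e: "e \<in> E" "f ` e = {f a, f b}" unfolding relabel_def by blast
  then obtain c d where cd: "c \<in> W" "d \<in> W" "e = {c, d}" using assms(2) unfolding edges_in_def by blast
  have "{f c, f d} = {f a, f b}" using e(2) unfolding cd(3) by simp
  then have "(f c = f a \<and> f d = f b) \<or> (f c = f b \<and> f d = f a)" by (metis doubleton_eq_iff)
  then have "(c = a \<and> d = b) \<or> (c = b \<and> d = a)"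
    using assms(1,3,4) cd by (meson inj_onD)
  then have "e = {a, b}" using cd(3) by (metis insert_commute)
  then show "{a, b} \<in> E" using e by simp
qed

lemma edge_in_W:
  assumes "edges_in W E" "{a, b} \<in> E"
  shows "a \<in> W" "b \<in> W"
proof -
  obtain c d where cd: "c \<in> W" "d \<in> W" and eq: "{a, b} = {c, d}"
    using assms unfolding edges_in_def by metis
  have "a \<in> {a, b}" "b \<in> {a, b}" by simp_all
  then have "a \<in> {c, d}" "b \<in> {c, d}" unfolding eq by -
  then show "a \<in> W" "b \<in> W" using cd by auto
qed

lemma edge_sub_W:
  assumes "edges_in W E" "e \<in> E" shows "e \<subseteq> W"
proof -
  obtain a b where "e = {a, b}" using assms unfolding edges_in_def by metis
  then show ?thesis using edge_in_W[OF assms(1)] assms(2) by simp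
qed

lemma rch_relabel:
  assumes "inj_on f W" "edges_in W E" "X \<subseteq> W" "(x, y) \<in> rch E X"
  shows "(f x, f y) \<in> rch (relabel f E) (f ` X)"
proof (rule rtrancl_map_lemma[OF assms(4)])
  fix a b assume ab: "(a, b) \<in> adjs E X"
  then have e: "{a, b} \<in> E" "a \<notin> X" "b \<notin> X" by (auto simp: adjs_def)
  then have W: "a \<in> W" "b \<in> W" using edge_in_W[OF assms(2)] by blast+
  have "f a \<notin> f ` X"
  proof
    assume "f a \<in> f ` X" then obtain z where "z \<in> X" "f a = f z" by blast
    then have "a = z" using W assms(1,3) by (meson inj_onD subsetD)
    then show False using e \<open>z \<in> X\<close> by blast
  qed
  moreover have "f b \<notin> f ` X"
  proof
    assume "f b \<in> f ` X" then obtain z where "z \<in> X" "f b = f z" by blast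
    then have "b = z" using W assms(1,3) by (meson inj_onD subsetD)
    then show False using e \<open>z \<in> X\<close> by blast
  qed
  moreover have "{f a, f b} \<in> relabel f E" using relabel_mem[OF e(1), of f] by simp
  ultimately show "(f a, f b) \<in> adjs (relabel f E) (f ` X)" by (simp add: adjs_def)
qed

lemma relabel_inv:
  assumes "inj_on f W" "edges_in W E"
  shows "relabel (inv_into W f) (relabel f E) = E"
proof -
  have "relabel (inv_into W f) (relabel f E) = relabel (inv_into W f \<circ> f) E" by (rule relabel_comp)
  also have "\<dots> = relabel id E"
  proof (rule relabel_cong)
    fix e x assume "e \<in> E" "x \<in> e"
    then have "x \<in> W" using edge_sub_W[OF assms(2)] by blast
    then show "(inv_into W f \<circ> f) x = id x" using assms(1) by simp
  qed
  finally show ?thesis by (simp add: relabel_id)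
qed

lemma rch_relabel_iff:
  assumes "inj_on f W" "edges_in W E" "X \<subseteq> W" "x \<in> W" "y \<in> W"
  shows "(f x, f y) \<in> rch (relabel f E) (f ` X) \<longleftrightarrow> (x, y) \<in> rch E X"
proof
  assume h: "(f x, f y) \<in> rch (relabel f E) (f ` X)"
  let ?g = "inv_into W f"
  have i: "inj_on ?g (f ` W)" using inj_on_inv_into by blast
  have ed: "edges_in (f ` W) (relabel f E)" using edges_in_relabel assms(1,2) by blast
  have s: "f ` X \<subseteq> f ` W" using assms(3) by blast
  have "(?g (f x), ?g (f y)) \<in> rch (relabel ?g (relabel f E)) (?g ` f ` X)"
    using rch_relabel[OF i ed s h] .
  moreover have "?g ` f ` X = X" using assms(1,3) by (meson inv_into_image_cancel)
  moreover have "?g (f x) = x" "?g (f y) = y" using assms(1,4,5) by simp_all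
  moreover have "relabel ?g (relabel f E) = E" using relabel_inv[OF assms(1,2)] .
  ultimately show "(x, y) \<in> rch E X" by simp
qed (rule rch_relabel[OF assms(1-3)])

lemma cmp_relabel:
  assumes "inj_on f W" "edges_in W E" "v \<in> W" "x \<in> W"
  shows "cmp (relabel f E) (f v) (f x) = f ` cmp E v x"
proof
  have ed: "edges_in (f ` W) (relabel f E)" using edges_in_relabel assms(1,2) by blast
  have vW: "{v} \<subseteq> W" using assms(3) by simp
  show "cmp (relabel f E) (f v) (f x) \<subseteq> f ` cmp E v x"
  proof
    fix y' assume "y' \<in> cmp (relabel f E) (f v) (f x)"
    then have h: "(f x, y') \<in> rch (relabel f E) (f ` {v})" unfolding cmp_def by simp
    then have "y' = f x \<or> y' \<in> f ` W" using rch_endpoint[OF _ ed] by blast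
    then obtain y where y: "y \<in> W" "y' = f y" using assms(4) by blast
    then have "(x, y) \<in> rch E {v}" using h rch_relabel_iff[OF assms(1,2) vW assms(4) y(1)] by simp
    then show "y' \<in> f ` cmp E v x" using y unfolding cmp_def by blast
  qed
  show "f ` cmp E v x \<subseteq> cmp (relabel f E) (f v) (f x)"
  proof
    fix y' assume "y' \<in> f ` cmp E v x"
    then obtain y where y: "(x, y) \<in> rch E {v}" "y' = f y" unfolding cmp_def by blast
    have "(f x, f y) \<in> rch (relabel f E) (f ` {v})" using rch_relabel[OF assms(1,2) vW y(1)] .
    then show "y' \<in> cmp (relabel f E) (f v) (f x)" using y(2) unfolding cmp_def by simp
  qed
qed

lemma card_cmp_relabel:
  assumes "inj_on f W" "edges_in W E" "v \<in> W" "x \<in> W"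
  shows "card (cmp (relabel f E) (f v) (f x)) = card (cmp E v x)"
proof -
  have "cmp E v x \<subseteq> W" using cmp_subset[OF assms(2)] assms(4) by blast
  then have "inj_on f (cmp E v x)" using assms(1) inj_on_subset by blast
  then show ?thesis unfolding cmp_relabel[OF assms] by (rule card_image)
qed

lemma dg_relabel:
  assumes "inj_on f W" "edges_in W E" "v \<in> W"
  shows "dg (relabel f E) (f v) = dg E v"
proof -
  have sub: "\<And>e. e \<in> E \<Longrightarrow> e \<subseteq> W" using edge_sub_W[OF assms(2)] by blast
  have iff: "\<And>e. e \<in> E \<Longrightarrow> f v \<in> f ` e \<longleftrightarrow> v \<in> e"
  proof -
    fix e assume "e \<in> E"
    then have "e \<subseteq> W" using sub by blast
    then show "f v \<in> f ` e \<longleftrightarrow> v \<in> e" using assms(1,3) by (metis inj_on_image_mem_iff)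
  qed
  have "{e'\<in>relabel f E. f v \<in> e'} = (\<lambda>e. f ` e) ` {e\<in>E. v \<in> e}"
    unfolding relabel_def using iff by blast
  moreover have "inj_on (\<lambda>e. f ` e) {e\<in>E. v \<in> e}"
  proof (rule inj_onI)
    fix x y assume "x \<in> {e\<in>E. v \<in> e}" "y \<in> {e\<in>E. v \<in> e}" "f ` x = f ` y"
    then show "x = y" using sub assms(1) by (metis (no_types, lifting) inj_on_image_eq_iff mem_Collect_eq)
  qed
  ultimately show ?thesis unfolding dg_def by (simp add: card_image)
qed

lemma spn_relabel:
  assumes "inj_on f W" "edges_in W E" "v \<in> W"
  shows "spn (f ` W) k (relabel f E) (f v) \<longleftrightarrow> spn W k E v"
proof
  have vW: "{v} \<subseteq> W" using assms(3) by simp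
  assume "spn W k E v"
  then obtain x y where xy: "x \<in> W" "y \<in> W" "x \<noteq> v" "y \<noteq> v" "k \<le> card (cmp E v x)"
    "k \<le> card (cmp E v y)" "(x, y) \<notin> rch E {v}" unfolding spn_def by blast
  have "f x \<noteq> f v" "f y \<noteq> f v" using xy assms(1,3) by (meson inj_onD)+
  moreover have "k \<le> card (cmp (relabel f E) (f v) (f x))" "k \<le> card (cmp (relabel f E) (f v) (f y))"
    using card_cmp_relabel[OF assms(1,2,3)] xy by simp_all
  moreover have "(f x, f y) \<notin> rch (relabel f E) {f v}"
    using rch_relabel_iff[OF assms(1,2) vW xy(1,2)] xy(7) by simp
  ultimately show "spn (f ` W) k (relabel f E) (f v)"
    unfolding spn_def using xy(1,2) assms(3) by blast
next
  have vW: "{v} \<subseteq> W" using assms(3) by simp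
  assume "spn (f ` W) k (relabel f E) (f v)"
  then obtain x' y' where xy: "x' \<in> f ` W" "y' \<in> f ` W" "x' \<noteq> f v" "y' \<noteq> f v"
    "k \<le> card (cmp (relabel f E) (f v) x')"
    "k \<le> card (cmp (relabel f E) (f v) y')" "(x', y') \<notin> rch (relabel f E) {f v}"
    unfolding spn_def by blast
  then obtain x y where w: "x \<in> W" "y \<in> W" "x' = f x" "y' = f y" by blast
  have "x \<noteq> v" "y \<noteq> v" using xy w by blast+
  moreover have "k \<le> card (cmp E v x)" "k \<le> card (cmp E v y)"
    using card_cmp_relabel[OF assms(1,2,3)] xy w by simp_all
  moreover have "(x, y) \<notin> rch E {v}"
    using rch_relabel_iff[OF assms(1,2) vW w(1,2)] xy(7) w by simp
  ultimately show "spn W k E v" unfolding spn_def using w(1,2) assms(3) by blast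
qed

lemma conn_relabel:
  assumes "inj_on f W" "edges_in W E"
  shows "conn (f ` W) (relabel f E) \<longleftrightarrow> conn W E"
proof -
  have "\<And>x y. x \<in> W \<Longrightarrow> y \<in> W \<Longrightarrow> (f x, f y) \<in> rch (relabel f E) {} \<longleftrightarrow> (x, y) \<in> rch E {}"
    using rch_relabel_iff[OF assms, of "{}"] by simp
  then show ?thesis unfolding conn_def by blast
qed



datatype vtx = Sp nat | Lf nat | Pc nat nat | Ex nat

lemma tree_edge:
  assumes "is_tree k E" "{x, y} \<in> E"
  shows "x < k" "y < k" "x \<noteq> y"
proof -
  have "{x, y} \<in> vpairs k" using assms unfolding is_tree_def by blast
  then obtain u v where uv: "{x, y} = {u, v}" "u < k" "v < k" "u \<noteq> v" unfolding vpairs_def by blast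
  have "x \<in> {u, v}" "y \<in> {u, v}" unfolding uv(1)[symmetric] by simp_all
  then show "x < k" "y < k" using uv by auto
  show "x \<noteq> y"
  proof
    assume "x = y" then have eq: "{u, v} = {x}" using uv(1) by simp
    have "u \<in> {x}" "v \<in> {x}" unfolding eq[symmetric] by simp_all
    then show False using uv(4) by simp
  qed
qed

locale glue =
  fixes k m c :: nat and p :: "nat \<Rightarrow> nat set set \<times> nat"
  assumes k2: "2 \<le> k" and m2: "2 \<le> m" and c2: "2 \<le> c"
    and ptree: "\<And>i. i < m \<Longrightarrow> is_tree k (fst (p i))"
    and proot: "\<And>i. i < m \<Longrightarrow> snd (p i) < k"
begin

abbreviation Ei where "Ei i \<equiv> fst (p i)"
abbreviation rt where "rt i \<equiv> snd (p i)"

definition V :: "vtx set" where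
  "V = Sp ` {..<m} \<union> Lf ` {..<m} \<union> (\<lambda>(i, x). Pc i x) ` ({..<m} \<times> {..<k}) \<union> Ex ` {..<c}"

definition H :: "vtx set set" where
  "H = {{Sp i, Sp (Suc i)} | i. Suc i < m} \<union> {{Sp i, Lf i} | i. i < m} \<union>
       {{Sp i, Pc i (rt i)} | i. i < m} \<union> {{Pc i x, Pc i y} | i x y. i < m \<and> {x, y} \<in> Ei i} \<union>
       {{Sp 0, Ex j} | j. j < c}"

lemma V_simps [simp]:
  "Sp i \<in> V \<longleftrightarrow> i < m" "Lf i \<in> V \<longleftrightarrow> i < m" "Pc i x \<in> V \<longleftrightarrow> i < m \<and> x < k" "Ex j \<in> V \<longleftrightarrow> j < c"
  unfolding V_def by auto

lemma finite_V: "finite V"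
  unfolding V_def by auto

lemma pedge: "i < m \<Longrightarrow> {x, y} \<in> Ei i \<Longrightarrow> x < k \<and> y < k \<and> x \<noteq> y"
  using tree_edge[OF ptree] by blast

lemma H_Sp: "{Sp i, u} \<in> H \<longleftrightarrow> (Suc i < m \<and> u = Sp (Suc i)) \<or> (\<exists>j. i = Suc j \<and> i < m \<and> u = Sp j) \<or>
   (i < m \<and> u = Lf i) \<or> (i < m \<and> u = Pc i (rt i)) \<or> (i = 0 \<and> (\<exists>j<c. u = Ex j))"
  unfolding H_def by (auto simp: doubleton_eq_iff)

lemma H_Lf: "{Lf i, u} \<in> H \<longleftrightarrow> i < m \<and> u = Sp i"
  unfolding H_def by (auto simp: doubleton_eq_iff)

lemma H_Ex: "{Ex j, u} \<in> H \<longleftrightarrow> j < c \<and> u = Sp 0"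
  unfolding H_def by (auto simp: doubleton_eq_iff)

lemma H_Pc: "{Pc i x, u} \<in> H \<longleftrightarrow> (i < m \<and> x = rt i \<and> u = Sp i) \<or> (i < m \<and> (\<exists>y. {x, y} \<in> Ei i \<and> u = Pc i y))"
proof
  assume "{Pc i x, u} \<in> H"
  then have "(i < m \<and> x = rt i \<and> u = Sp i) \<or> (\<exists>j a b. j < m \<and> {a, b} \<in> Ei j \<and> {Pc i x, u} = {Pc j a, Pc j b})"
    unfolding H_def by (auto simp: doubleton_eq_iff)
  then show "(i < m \<and> x = rt i \<and> u = Sp i) \<or> (i < m \<and> (\<exists>y. {x, y} \<in> Ei i \<and> u = Pc i y))"
  proof
    assume "\<exists>j a b. j < m \<and> {a, b} \<in> Ei j \<and> {Pc i x, u} = {Pc j a, Pc j b}"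
    then obtain j a b where jab: "j < m" "{a, b} \<in> Ei j" "{Pc i x, u} = {Pc j a, Pc j b}" by blast
    then have "(Pc i x = Pc j a \<and> u = Pc j b) \<or> (Pc i x = Pc j b \<and> u = Pc j a)"
      by (simp add: doubleton_eq_iff)
    then show ?thesis
    proof
      assume "Pc i x = Pc j a \<and> u = Pc j b" then show ?thesis using jab by auto
    next
      assume h: "Pc i x = Pc j b \<and> u = Pc j a"
      have "{b, a} \<in> Ei j" using jab(2) by (simp add: insert_commute)
      then show ?thesis using h jab by auto
    qed
  qed simp
next
  assume "(i < m \<and> x = rt i \<and> u = Sp i) \<or> (i < m \<and> (\<exists>y. {x, y} \<in> Ei i \<and> u = Pc i y))"
  then show "{Pc i x, u} \<in> H"
  proof
    assume "i < m \<and> x = rt i \<and> u = Sp i"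
    then show ?thesis unfolding H_def by (auto simp: insert_commute)
  next
    assume "i < m \<and> (\<exists>y. {x, y} \<in> Ei i \<and> u = Pc i y)"
    then show ?thesis unfolding H_def by blast
  qed
qed

lemma H_any: "{a, u} \<in> H \<longleftrightarrow>
   (case a of Sp i \<Rightarrow> (Suc i < m \<and> u = Sp (Suc i)) \<or> (\<exists>j. i = Suc j \<and> i < m \<and> u = Sp j) \<or>
       (i < m \<and> u = Lf i) \<or> (i < m \<and> u = Pc i (rt i)) \<or> (i = 0 \<and> (\<exists>j<c. u = Ex j))
     | Lf i \<Rightarrow> i < m \<and> u = Sp i
     | Ex j \<Rightarrow> j < c \<and> u = Sp 0
     | Pc i x \<Rightarrow> (i < m \<and> x = rt i \<and> u = Sp i) \<or> (i < m \<and> (\<exists>y. {x, y} \<in> Ei i \<and> u = Pc i y)))"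
  by (cases a) (simp_all only: H_Sp H_Lf H_Ex H_Pc vtx.case)

lemma H_doubleton: "e \<in> H \<Longrightarrow> \<exists>a b. e = {a, b}"
  unfolding H_def by blast

lemma edges_in_H: "edges_in V H"
  unfolding edges_in_def
proof
  fix e assume "e \<in> H"
  then obtain a b where e: "e = {a, b}" using H_doubleton by blast
  have "a \<in> V \<and> b \<in> V \<and> a \<noteq> b"
  proof (cases a)
    case (Sp i) then show ?thesis using \<open>e \<in> H\<close> e H_Sp[of i b] proot m2 by auto
  next
    case (Lf i) then show ?thesis using \<open>e \<in> H\<close> e H_Lf[of i b] by auto
  next
    case (Ex j) then show ?thesis using \<open>e \<in> H\<close> e H_Ex[of j b] m2 by auto
  next
    case (Pc i x) then show ?thesis using \<open>e \<in> H\<close> e H_Pc[of i x b] proot pedge by auto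
  qed
  then show "\<exists>a b. a \<in> V \<and> b \<in> V \<and> a \<noteq> b \<and> e = {a, b}" using e by blast
qed


lemma adj_H: "(a, b) \<in> adjs H X \<longleftrightarrow> {a, b} \<in> H \<and> a \<notin> X \<and> b \<notin> X"
  by (simp add: adjs_def)

lemma H_sym: "{a, b} \<in> H \<longleftrightarrow> {b, a} \<in> H"
  by (simp add: insert_commute)

lemma spine_rch: "i < m \<Longrightarrow> (\<forall>j. Sp j \<notin> X) \<Longrightarrow> (Sp i, Sp 0) \<in> rch H X"
proof (induction i)
  case 0 then show ?case by simp
next
  case (Suc i)
  have "{Sp (Suc i), Sp i} \<in> H" using Suc.prems H_Sp by simp
  then have "(Sp (Suc i), Sp i) \<in> rch H X" using Suc.prems by (simp add: rch_edge)
  moreover have "(Sp i, Sp 0) \<in> rch H X" using Suc by simp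
  ultimately show ?case by (rule rtrancl_trans)
qed

lemma lf_rch: "i < m \<Longrightarrow> Lf i \<notin> X \<Longrightarrow> (\<forall>j. Sp j \<notin> X) \<Longrightarrow> (Lf i, Sp 0) \<in> rch H X"
proof -
  assume a: "i < m" "Lf i \<notin> X" "\<forall>j. Sp j \<notin> X"
  then have "(Lf i, Sp i) \<in> rch H X" using H_Lf by (simp add: rch_edge)
  then show ?thesis using spine_rch a by (meson rtrancl_trans)
qed

lemma ex_rch: "j < c \<Longrightarrow> Ex j \<notin> X \<Longrightarrow> (\<forall>j. Sp j \<notin> X) \<Longrightarrow> (Ex j, Sp 0) \<in> rch H X"
  using H_Ex by (simp add: rch_edge)

lemma piece_rch:
  assumes "i < m" "x < k" "y < k" "\<forall>z. Pc i z \<notin> X"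
  shows "(Pc i x, Pc i y) \<in> rch H X"
proof -
  have "connected_on k (Ei i)" using ptree[OF assms(1)] unfolding is_tree_def by blast
  then have "(x, y) \<in> {(a, b). {a, b} \<in> Ei i}\<^sup>*" using assms(2,3) unfolding connected_on_def by blast
  then show ?thesis
  proof (rule rtrancl_map_lemma)
    fix a b assume "(a, b) \<in> {(a, b). {a, b} \<in> Ei i}"
    then have "{Pc i a, Pc i b} \<in> H" using H_Pc assms(1) by auto
    then show "(Pc i a, Pc i b) \<in> adjs H X" using assms(4) by (simp add: adjs_def)
  qed
qed

lemma root_sp_rch:
  assumes "i < m" "Pc i (rt i) \<notin> X" "Sp i \<notin> X"
  shows "(Pc i (rt i), Sp i) \<in> rch H X"
  using assms H_Pc by (simp add: rch_edge)

lemma pc_rch: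
  assumes "i < m" "x < k" "\<forall>z. Pc i z \<notin> X" "\<forall>j. Sp j \<notin> X"
  shows "(Pc i x, Sp 0) \<in> rch H X"
proof -
  have "(Pc i x, Pc i (rt i)) \<in> rch H X" using piece_rch assms proot by blast
  moreover have "(Pc i (rt i), Sp i) \<in> rch H X" using root_sp_rch assms by blast
  moreover have "(Sp i, Sp 0) \<in> rch H X" using spine_rch assms by blast
  ultimately show ?thesis by (meson rtrancl_trans)
qed

lemma all_rch: assumes "x \<in> V" shows "(x, Sp 0) \<in> rch H {}"
proof (cases x)
  case (Sp i) then show ?thesis using assms spine_rch[of i "{}"] by simp
next
  case (Lf i) then show ?thesis using assms lf_rch[of i "{}"] by simp
next
  case (Ex j) then show ?thesis using assms ex_rch[of j "{}"] by simp
next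
  case (Pc i z) then show ?thesis using assms pc_rch[of i z "{}"] by simp
qed

lemma conn_H: "conn V H"
  unfolding conn_def
proof (intro ballI)
  fix u v assume "u \<in> V" "v \<in> V"
  then have "(u, Sp 0) \<in> rch H {}" "(Sp 0, v) \<in> rch H {}" using all_rch[of u] rch_sym[OF all_rch[of v]] by simp_all
  then show "(u, v) \<in> rch H {}" by (rule rtrancl_trans)
qed

lemma not_conn_closure:
  assumes "x \<in> V" "y \<in> V" "x \<in> L" "y \<notin> L"
    and "\<And>a b. {a, b} \<in> F \<Longrightarrow> a \<in> L \<Longrightarrow> b \<in> L"
  shows "\<not> conn V F"
proof
  assume "conn V F"
  then have "(x, y) \<in> rch F {}" using assms(1,2) unfolding conn_def by blast
  then have "y \<in> L" using assms(3)
    by (rule closure_lemma) (use assms(5) in \<open>auto simp: adjs_def\<close>)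
  then show False using assms(4) by simp
qed


lemma bridge_spine:
  assumes "Suc i < m"
  shows "\<not> conn V (H - {{Sp i, Sp (Suc i)}})"
proof -
  define L where "L = {v. case v of Sp j \<Rightarrow> j \<le> i | Lf j \<Rightarrow> j \<le> i | Pc j z \<Rightarrow> j \<le> i | Ex j \<Rightarrow> True}"
  show ?thesis
  proof (rule not_conn_closure[of "Sp 0" "Sp (Suc i)" L])
    fix a b assume ab: "{a, b} \<in> H - {{Sp i, Sp (Suc i)}}" "a \<in> L"
    then have h: "{a, b} \<in> H" "{a, b} \<noteq> {Sp i, Sp (Suc i)}" by simp_all
    show "b \<in> L"
    proof (cases a)
      case (Sp j)
      then have "j \<le> i" using ab(2) L_def by simp
      then show ?thesis using h Sp H_Sp[of j b] unfolding L_def by auto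
    next
      case (Lf j) then show ?thesis using h ab(2) H_Lf[of j b] unfolding L_def by auto
    next
      case (Ex j) then show ?thesis using h ab(2) H_Ex[of j b] unfolding L_def by auto
    next
      case (Pc j z) then show ?thesis using h ab(2) H_Pc[of j z b] unfolding L_def by auto
    qed
  qed (use assms L_def in auto)
qed

lemma bridge_leaf:
  assumes "i < m"
  shows "\<not> conn V (H - {{Sp i, Lf i}})"
proof (rule not_conn_closure[of "Lf i" "Sp i" "{Lf i}"])
  fix a b assume ab: "{a, b} \<in> H - {{Sp i, Lf i}}" "a \<in> {Lf i}"
  then have "{Lf i, b} \<in> H" "{Lf i, b} \<noteq> {Lf i, Sp i}" by (auto simp: insert_commute)
  then show "b \<in> {Lf i}" using H_Lf by simp
qed (use assms in auto)

lemma bridge_ex: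
  assumes "j < c"
  shows "\<not> conn V (H - {{Sp 0, Ex j}})"
proof (rule not_conn_closure[of "Ex j" "Sp 0" "{Ex j}"])
  fix a b assume ab: "{a, b} \<in> H - {{Sp 0, Ex j}}" "a \<in> {Ex j}"
  then have "{Ex j, b} \<in> H" "{Ex j, b} \<noteq> {Ex j, Sp 0}" by (auto simp: insert_commute)
  then show "b \<in> {Ex j}" using H_Ex by simp
qed (use assms m2 in auto)

lemma bridge_root:
  assumes "i < m"
  shows "\<not> conn V (H - {{Sp i, Pc i (rt i)}})"
proof (rule not_conn_closure[of "Pc i (rt i)" "Sp i" "{v. \<exists>z. v = Pc i z}"])
  fix a b assume ab: "{a, b} \<in> H - {{Sp i, Pc i (rt i)}}" "a \<in> {v. \<exists>z. v = Pc i z}"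
  then obtain z where z: "a = Pc i z" by blast
  have "{Pc i z, b} \<in> H" "{Pc i z, b} \<noteq> {Pc i (rt i), Sp i}" using ab z by (auto simp: insert_commute)
  then show "b \<in> {v. \<exists>z. v = Pc i z}" using H_Pc[of i z b] by auto
qed (use assms proot in auto)

lemma bridge_piece:
  assumes "i < m" "{x, y} \<in> Ei i"
  shows "\<not> conn V (H - {{Pc i x, Pc i y}})"
proof -
  let ?F = "Ei i - {{x, y}}"
  have "\<not> connected_on k ?F" using ptree[OF assms(1)] assms(2) unfolding is_tree_def by blast
  then obtain u w where uw: "u < k" "w < k" "(u, w) \<notin> rch ?F {}"
    unfolding conn_alt conn_def by blast
  define Cr where "Cr = {z. (rt i, z) \<in> rch ?F {}}"
  have "\<exists>z0. z0 < k \<and> z0 \<notin> Cr"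
  proof (rule ccontr)
    assume "\<not> ?thesis"
    then have "u \<in> Cr" "w \<in> Cr" using uw by auto
    then have "(u, rt i) \<in> rch ?F {}" "(rt i, w) \<in> rch ?F {}" unfolding Cr_def using rch_sym by auto
    then show False using uw(3) by (meson rtrancl_trans)
  qed
  then obtain z0 where z0: "z0 < k" "z0 \<notin> Cr" by blast
  define L where "L = {v. \<forall>z. v = Pc i z \<longrightarrow> z \<in> Cr}"
  show ?thesis
  proof (rule not_conn_closure[of "Pc i (rt i)" "Pc i z0" L])
    show "Pc i (rt i) \<in> L" unfolding L_def Cr_def by simp
    show "Pc i z0 \<notin> L" unfolding L_def using z0 by simp
    show "Pc i (rt i) \<in> V" "Pc i z0 \<in> V" using assms(1) proot z0 by auto
  next
    fix a b assume ab: "{a, b} \<in> H - {{Pc i x, Pc i y}}" "a \<in> L"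
    have "\<forall>z. b = Pc i z \<longrightarrow> z \<in> Cr"
    proof (intro allI impI)
      fix z assume bz: "b = Pc i z"
      have "{Pc i z, a} \<in> H" using ab bz by (simp add: insert_commute)
      then have "(z = rt i \<and> a = Sp i) \<or> (\<exists>y'. {z, y'} \<in> Ei i \<and> a = Pc i y')"
        using H_Pc[of i z a] by auto
      then show "z \<in> Cr"
      proof
        assume "z = rt i \<and> a = Sp i" then show ?thesis unfolding Cr_def by simp
      next
        assume "\<exists>y'. {z, y'} \<in> Ei i \<and> a = Pc i y'"
        then obtain y' where y': "{z, y'} \<in> Ei i" "a = Pc i y'" by blast
        then have "y' \<in> Cr" using ab(2) unfolding L_def by blast
        have "{z, y'} \<noteq> {x, y}"
        proof
          assume "{z, y'} = {x, y}"
          then have "{Pc i z, Pc i y'} = {Pc i x, Pc i y}" by (metis image_empty image_insert)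
          then show False using ab(1) bz y'(2) by (simp add: insert_commute)
        qed
        then have "(y', z) \<in> adjs ?F {}" using y' by (simp add: adjs_def insert_commute)
        then show "z \<in> Cr" using \<open>y' \<in> Cr\<close> unfolding Cr_def mem_Collect_eq by (rule rtrancl.rtrancl_into_rtrancl[rotated])
      qed
    qed
    then show "b \<in> L" unfolding L_def by simp
  qed
qed

lemma bridge_H:
  assumes "e \<in> H"
  shows "\<not> conn V (H - {e})"
proof -
  have "(\<exists>i. Suc i < m \<and> e = {Sp i, Sp (Suc i)}) \<or> (\<exists>i. i < m \<and> e = {Sp i, Lf i}) \<or>
    (\<exists>i. i < m \<and> e = {Sp i, Pc i (rt i)}) \<or> (\<exists>i x y. i < m \<and> {x, y} \<in> Ei i \<and> e = {Pc i x, Pc i y}) \<or>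
    (\<exists>j. j < c \<and> e = {Sp 0, Ex j})"
    using assms unfolding H_def by blast
  then show ?thesis using bridge_spine bridge_leaf bridge_root bridge_piece bridge_ex by blast
qed


definition nb :: "vtx \<Rightarrow> vtx set" where "nb v = {u. {v, u} \<in> H}"

lemma dg_nb: "dg H v = card (nb v)"
proof -
  have "\<forall>e\<in>H. \<exists>a b. e = {a, b}" using H_doubleton by simp
  then show ?thesis unfolding nb_def by (rule dg_nbrs)
qed

lemma nb_sub: "nb v \<subseteq> V"
proof
  fix u assume "u \<in> nb v" then have "{v, u} \<in> H" unfolding nb_def by simp
  then show "u \<in> V" by (rule edge_in_W(2)[OF edges_in_H])
qed

lemma finite_nb: "finite (nb v)"
  using nb_sub finite_V finite_subset by blast

lemma card4: "card {w, x, y, z} \<le> 4"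
proof -
  have "card (set [w, x, y, z]) \<le> length [w, x, y, z]" by (rule card_length)
  then show ?thesis by simp
qed

lemma dg_Sp0: "5 \<le> dg H (Sp 0)"
proof -
  have "{Sp 0, Sp 1} \<in> H" "{Sp 0, Lf 0} \<in> H" "{Sp 0, Pc 0 (rt 0)} \<in> H" "{Sp 0, Ex 0} \<in> H" "{Sp 0, Ex 1} \<in> H"
    using m2 c2 by (simp_all add: H_Sp)
  then have sub: "{Sp 1, Lf 0, Pc 0 (rt 0), Ex 0, Ex 1} \<subseteq> nb (Sp 0)"
    unfolding nb_def by simp
  have "card {Sp 1, Lf 0, Pc 0 (rt 0), Ex 0, Ex 1} = 5" by simp
  then show ?thesis using card_mono[OF finite_nb sub] dg_nb by simp
qed

lemma dg_Sp: "0 < i \<Longrightarrow> dg H (Sp i) \<le> 4"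
proof -
  assume i: "0 < i"
  have "nb (Sp i) \<subseteq> {Sp (Suc i), Sp (i - 1), Lf i, Pc i (rt i)}"
  proof
    fix u assume "u \<in> nb (Sp i)"
    then have "{Sp i, u} \<in> H" unfolding nb_def by simp
    then show "u \<in> {Sp (Suc i), Sp (i - 1), Lf i, Pc i (rt i)}" unfolding H_Sp using i by auto
  qed
  then have "card (nb (Sp i)) \<le> card {Sp (Suc i), Sp (i - 1), Lf i, Pc i (rt i)}"
    by (rule card_mono[rotated]) simp
  then have "card (nb (Sp i)) \<le> 4" using card4[of "Sp (Suc i)" "Sp (i - 1)" "Lf i" "Pc i (rt i)"] by linarith
  then show ?thesis by (simp add: dg_nb)
qed

lemma dg_Lf: "i < m \<Longrightarrow> dg H (Lf i) = 1"
proof -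
  assume "i < m"
  then have "nb (Lf i) = {Sp i}" unfolding nb_def using H_Lf by auto
  then show ?thesis using dg_nb by simp
qed

lemma dg_Ex: "j < c \<Longrightarrow> dg H (Ex j) = 1"
proof -
  assume "j < c"
  then have "nb (Ex j) = {Sp 0}" unfolding nb_def using H_Ex by auto
  then show ?thesis using dg_nb by simp
qed

lemma root_nbr: "i < m \<Longrightarrow> \<exists>z. {rt i, z} \<in> Ei i"
proof -
  assume i: "i < m"
  define y where "y = (if rt i = 0 then 1 else (0::nat))"
  have y: "y < k" "y \<noteq> rt i" unfolding y_def using k2 by auto
  have "connected_on k (Ei i)" using ptree[OF i] unfolding is_tree_def by blast
  then have "(rt i, y) \<in> {(a, b). {a, b} \<in> Ei i}\<^sup>*" using y proot[OF i] unfolding connected_on_def by blast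
  then show ?thesis using y(2) by (cases rule: converse_rtranclE) auto
qed

lemma dg_root: "i < m \<Longrightarrow> 2 \<le> dg H (Pc i (rt i))"
proof -
  assume i: "i < m"
  obtain z where z: "{rt i, z} \<in> Ei i" using root_nbr[OF i] by blast
  have sub: "{Sp i, Pc i z} \<subseteq> nb (Pc i (rt i))"
    unfolding nb_def using i z H_Pc by auto
  have "card {Sp i, Pc i z} = 2" by simp
  then show ?thesis using card_mono[OF finite_nb sub] dg_nb by simp
qed

lemma dg_bound: "v \<in> V \<Longrightarrow> dg H v \<le> k + c + 4"
proof (cases v)
  case (Sp i)
  have "nb (Sp i) \<subseteq> {Sp (Suc i), Sp (i - 1), Lf i, Pc i (rt i)} \<union> Ex ` {..<c}"
    unfolding nb_def using H_Sp[of i] by auto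
  then have "card (nb (Sp i)) \<le> card ({Sp (Suc i), Sp (i - 1), Lf i, Pc i (rt i)} \<union> Ex ` {..<c})"
    by (rule card_mono[rotated]) simp
  also have "\<dots> \<le> card {Sp (Suc i), Sp (i - 1), Lf i, Pc i (rt i)} + card (Ex ` {..<c})"
    by (rule card_Un_le)
  also have "\<dots> \<le> 4 + c" using card4 card_image_le[of "{..<c}" Ex] by (simp add: add_mono)
  finally show ?thesis using Sp dg_nb by simp
next
  case (Lf i)
  have "nb (Lf i) \<subseteq> {Sp i}" unfolding nb_def using H_Lf by auto
  then have "card (nb (Lf i)) \<le> 1" using card_mono[of "{Sp i}"] by fastforce
  then show ?thesis using Lf dg_nb by simp
next
  case (Ex j)
  have "nb (Ex j) \<subseteq> {Sp 0}" unfolding nb_def using H_Ex by auto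
  then have "card (nb (Ex j)) \<le> 1" using card_mono[of "{Sp 0}"] by fastforce
  then show ?thesis using Ex dg_nb by simp
next
  case (Pc i x)
  have "nb (Pc i x) \<subseteq> insert (Sp i) (Pc i ` {..<k})"
    unfolding nb_def using H_Pc[of i x] pedge by fastforce
  then have "card (nb (Pc i x)) \<le> card (insert (Sp i) (Pc i ` {..<k}))"
    by (rule card_mono[rotated]) simp
  also have "\<dots> \<le> Suc (card (Pc i ` {..<k}))" by (simp add: card_insert_le_m1)
  also have "\<dots> \<le> Suc k" using card_image_le[of "{..<k}" "Pc i"] by simp
  finally show ?thesis using Pc dg_nb by simp
qed


lemma cmp_piece:
  assumes i: "i < m"
  shows "cmp H (Sp i) (Pc i (rt i)) = Pc i ` {..<k}"
proof
  show "cmp H (Sp i) (Pc i (rt i)) \<subseteq> Pc i ` {..<k}"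
  proof
    fix t assume "t \<in> cmp H (Sp i) (Pc i (rt i))"
    then have "(Pc i (rt i), t) \<in> rch H {Sp i}" unfolding cmp_def by simp
    then show "t \<in> Pc i ` {..<k}"
    proof (rule closure_lemma)
      show "Pc i (rt i) \<in> Pc i ` {..<k}" using proot[OF i] by simp
    next
      fix a b assume ab: "(a, b) \<in> adjs H {Sp i}" "a \<in> Pc i ` {..<k}"
      then obtain z where z: "a = Pc i z" "z < k" by blast
      have "{Pc i z, b} \<in> H" "b \<noteq> Sp i" using ab z by (simp_all add: adjs_def)
      then have "\<exists>y. {z, y} \<in> Ei i \<and> b = Pc i y" using H_Pc[of i z b] by auto
      then obtain y where "{z, y} \<in> Ei i" "b = Pc i y" by blast
      then show "b \<in> Pc i ` {..<k}" using pedge[OF i] by blast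
    qed
  qed
  show "Pc i ` {..<k} \<subseteq> cmp H (Sp i) (Pc i (rt i))"
  proof
    fix t assume "t \<in> Pc i ` {..<k}"
    then obtain z where z: "t = Pc i z" "z < k" by blast
    have "(Pc i (rt i), Pc i z) \<in> rch H {Sp i}" using piece_rch[OF i proot[OF i] z(2)] by simp
    then show "t \<in> cmp H (Sp i) (Pc i (rt i))" unfolding cmp_def using z by simp
  qed
qed

lemma card_piece: "card (Pc i ` {..<k}) = k"
proof -
  have "inj_on (Pc i) {..<k}" by (simp add: inj_on_def)
  then show ?thesis by (simp add: card_image)
qed

lemma finite_cmp: "x \<in> V \<Longrightarrow> finite (cmp H v x)"
  using cmp_subset[OF edges_in_H, of v x] finite_V by (metis finite_insert finite_subset)

lemma sp_spn:
  assumes i: "i < m"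
  shows "spn V k H (Sp i)"
proof -
  define j where "j = (if Suc i < m then Suc i else i - 1)"
  have j: "j < m" "j \<noteq> i" unfolding j_def using i m2 by auto
  have cj: "Pc j ` {..<k} \<subseteq> cmp H (Sp i) (Pc j (rt j))"
  proof
    fix t assume "t \<in> Pc j ` {..<k}"
    then obtain z where z: "t = Pc j z" "z < k" by blast
    have "(Pc j (rt j), Pc j z) \<in> rch H {Sp i}" using piece_rch[OF j(1) proot[OF j(1)] z(2)] by simp
    then show "t \<in> cmp H (Sp i) (Pc j (rt j))" unfolding cmp_def using z by simp
  qed
  have fj: "finite (cmp H (Sp i) (Pc j (rt j)))" using finite_cmp proot j by simp
  have "k \<le> card (cmp H (Sp i) (Pc j (rt j)))" using card_mono[OF fj cj] card_piece by simp
  moreover have "k \<le> card (cmp H (Sp i) (Pc i (rt i)))" using cmp_piece[OF i] card_piece by simp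
  moreover have "(Pc i (rt i), Pc j (rt j)) \<notin> rch H {Sp i}"
  proof
    assume "(Pc i (rt i), Pc j (rt j)) \<in> rch H {Sp i}"
    then have "Pc j (rt j) \<in> cmp H (Sp i) (Pc i (rt i))" unfolding cmp_def by simp
    then show False using cmp_piece[OF i] j(2) by auto
  qed
  moreover have "Pc i (rt i) \<in> V" "Pc j (rt j) \<in> V" using i j proot by auto
  moreover have "Pc i (rt i) \<noteq> Sp i" "Pc j (rt j) \<noteq> Sp i" by simp_all
  moreover have "Sp i \<in> V" using i by simp
  ultimately show ?thesis unfolding spn_def by blast
qed

lemma big_reach:
  assumes v: "v \<in> V" "\<forall>i. v \<noteq> Sp i" and x: "x \<in> V" "x \<noteq> v" and big: "k \<le> card (cmp H v x)"
  shows "(x, Sp 0) \<in> rch H {v}"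
proof -
  have noSp: "\<forall>j. Sp j \<notin> {v}" using v by auto
  show ?thesis
  proof (cases x)
    case (Sp i) then show ?thesis using x spine_rch[OF _ noSp] by simp
  next
    case (Lf i) then show ?thesis using x lf_rch[OF _ _ noSp] by simp
  next
    case (Ex j) then show ?thesis using x ex_rch[OF _ _ noSp] by simp
  next
    case (Pc j z)
    show ?thesis
    proof (cases "\<forall>y. Pc j y \<noteq> v")
      case True then show ?thesis using Pc x pc_rch[OF _ _ _ noSp] by simp
    next
      case False
      then obtain w where w: "v = Pc j w" by blast
      have jm: "j < m" "z < k" using Pc x by auto
      show ?thesis
      proof (cases "(x, Pc j (rt j)) \<in> rch H {v}")
        case True
        have "Pc j (rt j) \<noteq> v"
        proof
          assume "Pc j (rt j) = v"
          then have "x = Pc j (rt j)" using True rch_into_X by (metis singletonI)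
          then show False using x \<open>Pc j (rt j) = v\<close> by simp
        qed
        then have "(Pc j (rt j), Sp j) \<in> rch H {v}" using root_sp_rch[OF jm(1)] noSp by simp
        moreover have "(Sp j, Sp 0) \<in> rch H {v}" using spine_rch[OF jm(1) noSp] .
        ultimately show ?thesis using True by (meson rtrancl_trans)
      next
        case False
        have inv: "t \<in> Pc j ` ({..<k} - {w}) \<or> (x, Pc j (rt j)) \<in> rch H {v}"
          if "(x, t) \<in> rch H {v}" for t
          using that
        proof (induction rule: rtrancl_induct)
          case base then show ?case using Pc jm x w by auto
        next
          case (step t t')
          show ?case
          proof (cases "(x, Pc j (rt j)) \<in> rch H {v}")
            case True then show ?thesis by simp
          next
            case nr: False
            then obtain z' where z': "t = Pc j z'" "z' < k" "z' \<noteq> w" using step.IH by blast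
            have e: "{Pc j z', t'} \<in> H" "t' \<noteq> v" using step.hyps(2) z' by (simp_all add: adjs_def)
            have "(z' = rt j \<and> t' = Sp j) \<or> (\<exists>y. {z', y} \<in> Ei j \<and> t' = Pc j y)"
              using H_Pc[of j z' t'] e(1) by auto
            then show ?thesis
            proof
              assume "z' = rt j \<and> t' = Sp j"
              then have "(x, Pc j (rt j)) \<in> rch H {v}" using step.hyps(1) z'(1) by simp
              then show ?thesis by simp
            next
              assume "\<exists>y. {z', y} \<in> Ei j \<and> t' = Pc j y"
              then obtain y where y: "{z', y} \<in> Ei j" "t' = Pc j y" by blast
              then have "y < k" using pedge[OF jm(1)] by blast
              moreover have "y \<noteq> w" using y(2) e(2) w by auto
              ultimately show ?thesis using y(2) by blast
            qed
          qed
        qed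
        have "cmp H v x \<subseteq> Pc j ` ({..<k} - {w})"
          using inv False unfolding cmp_def by blast
        then have "card (cmp H v x) \<le> card (Pc j ` ({..<k} - {w}))" by (rule card_mono[rotated]) simp
        also have "\<dots> \<le> card ({..<k} - {w})" by (rule card_image_le) simp
        also have "\<dots> < k"
        proof -
          have "w < k" using v w by simp
          then show ?thesis by simp
        qed
        finally show ?thesis using big by simp
      qed
    qed
  qed
qed

lemma nonsp_spn:
  assumes v: "v \<in> V" "\<forall>i. v \<noteq> Sp i"
  shows "\<not> spn V k H v"
proof
  assume "spn V k H v"
  then obtain x y where xy: "x \<in> V" "y \<in> V" "x \<noteq> v" "y \<noteq> v" "k \<le> card (cmp H v x)"
    "k \<le> card (cmp H v y)" "(x, y) \<notin> rch H {v}" unfolding spn_def by blast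
  have "(x, Sp 0) \<in> rch H {v}" using big_reach[OF v xy(1,3,5)] .
  moreover have "(Sp 0, y) \<in> rch H {v}" using rch_sym[OF big_reach[OF v xy(2,4,6)]] .
  ultimately show False using xy(7) by (meson rtrancl_trans)
qed

lemma spn_iff: "v \<in> V \<Longrightarrow> spn V k H v \<longleftrightarrow> (\<exists>i<m. v = Sp i)"
  using sp_spn nonsp_spn by (cases v) auto

end


locale glue2 = g1: glue k m c p + g2: glue k m c p' for k m c p p' +
  fixes h :: "vtx \<Rightarrow> vtx"
  assumes hbij: "bij_betw h g1.V g2.V"
    and hH: "g2.H = relabel h g1.H"
begin

lemma VV: "g2.V = g1.V"
  by (simp add: g1.V_def g2.V_def)

lemma hinj: "inj_on h g1.V" using hbij by (simp add: bij_betw_def)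
lemma himg: "h ` g1.V = g1.V" using hbij VV by (simp add: bij_betw_def)
lemma hV: "v \<in> g1.V \<Longrightarrow> h v \<in> g1.V" using himg by blast

lemma t_spn: "v \<in> g1.V \<Longrightarrow> spn g1.V k g2.H (h v) \<longleftrightarrow> spn g1.V k g1.H v"
  using spn_relabel[OF hinj g1.edges_in_H, of v k] himg hH by simp

lemma t_dg: "v \<in> g1.V \<Longrightarrow> dg g2.H (h v) = dg g1.H v"
  using dg_relabel[OF hinj g1.edges_in_H] hH by simp

lemma t_edge: "a \<in> g1.V \<Longrightarrow> b \<in> g1.V \<Longrightarrow> {h a, h b} \<in> g2.H \<longleftrightarrow> {a, b} \<in> g1.H"
  using relabel_edge_iff[OF hinj g1.edges_in_H] hH by simp

lemma t_cmp: "v \<in> g1.V \<Longrightarrow> x \<in> g1.V \<Longrightarrow> cmp g2.H (h v) (h x) = h ` cmp g1.H v x"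
  using cmp_relabel[OF hinj g1.edges_in_H] hH by simp

lemma h_spine: "i < m \<Longrightarrow> \<exists>j<m. h (Sp i) = Sp j"
proof -
  assume i: "i < m"
  have "spn g1.V k g1.H (Sp i)" using g1.sp_spn[OF i] .
  then have "spn g1.V k g2.H (h (Sp i))" using t_spn i by simp
  moreover have "h (Sp i) \<in> g1.V" using hV i by simp
  ultimately show ?thesis using g2.spn_iff VV by simp
qed

lemma h_Sp0: "h (Sp 0) = Sp 0"
proof -
  obtain j where j: "j < m" "h (Sp 0) = Sp j" using h_spine g1.m2 by force
  have "5 \<le> dg g2.H (h (Sp 0))" using t_dg g1.dg_Sp0 g1.m2 by simp
  then have "\<not> 0 < j" using g2.dg_Sp j by fastforce
  then show ?thesis using j by simp
qed

lemma h_Sp: "i < m \<Longrightarrow> h (Sp i) = Sp i"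
proof (induction i rule: less_induct)
  case (less i)
  show ?case
  proof (cases i)
    case 0 then show ?thesis using h_Sp0 by simp
  next
    case (Suc i0)
    have IH: "h (Sp i0) = Sp i0" using less Suc by simp
    obtain j where j: "j < m" "h (Sp i) = Sp j" using h_spine less.prems by blast
    have "{Sp i0, Sp i} \<in> g1.H" using g1.H_Sp less.prems Suc by simp
    then have "{h (Sp i0), h (Sp i)} \<in> g2.H" using t_edge less.prems Suc by simp
    then have "{Sp i0, Sp j} \<in> g2.H" using IH j by simp
    then have "j = Suc i0 \<or> (\<exists>j0. i0 = Suc j0 \<and> j = j0)" using g2.H_Sp[of i0 "Sp j"] by auto
    then show ?thesis
    proof
      assume "j = Suc i0" then show ?thesis using j Suc by simp
    next
      assume "\<exists>j0. i0 = Suc j0 \<and> j = j0"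
      then obtain j0 where j0: "i0 = Suc j0" "j = j0" by blast
      have "h (Sp j0) = Sp j0" using less j0 Suc by simp
      then have "h (Sp i) = h (Sp j0)" using j j0 by simp
      then have "Sp i = Sp j0" using hinj less.prems j0 Suc by (simp add: inj_on_eq_iff)
      then show ?thesis using j0 Suc by simp
    qed
  qed
qed

lemma h_root: "i < m \<Longrightarrow> h (Pc i (g1.rt i)) = Pc i (g2.rt i)"
proof -
  assume i: "i < m"
  have r: "Pc i (g1.rt i) \<in> g1.V" using i g1.proot by simp
  have "{Sp i, Pc i (g1.rt i)} \<in> g1.H" using i g1.H_Sp by simp
  then have "{Sp i, h (Pc i (g1.rt i))} \<in> g2.H" using t_edge[of "Sp i" "Pc i (g1.rt i)"] i r h_Sp by simp
  then have cases: "(Suc i < m \<and> h (Pc i (g1.rt i)) = Sp (Suc i)) \<or> (\<exists>j. i = Suc j \<and> h (Pc i (g1.rt i)) = Sp j) \<or>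
      h (Pc i (g1.rt i)) = Lf i \<or> h (Pc i (g1.rt i)) = Pc i (g2.rt i) \<or> (i = 0 \<and> (\<exists>j<c. h (Pc i (g1.rt i)) = Ex j))"
    using g2.H_Sp[of i] by auto
  have nsp: "\<not> spn g1.V k g2.H (h (Pc i (g1.rt i)))" using t_spn r g1.nonsp_spn r by simp
  have d2: "2 \<le> dg g2.H (h (Pc i (g1.rt i)))" using t_dg r g1.dg_root i by simp
  show ?thesis
  proof -
    have "\<not> (Suc i < m \<and> h (Pc i (g1.rt i)) = Sp (Suc i))" using nsp g2.sp_spn by auto
    moreover have "\<not> (\<exists>j. i = Suc j \<and> h (Pc i (g1.rt i)) = Sp j)" using nsp g2.sp_spn i by auto
    moreover have "h (Pc i (g1.rt i)) \<noteq> Lf i" using d2 g2.dg_Lf i by auto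
    moreover have "\<not> (i = 0 \<and> (\<exists>j<c. h (Pc i (g1.rt i)) = Ex j))" using d2 g2.dg_Ex by auto
    ultimately show ?thesis using cases by blast
  qed
qed

lemma h_piece: "i < m \<Longrightarrow> h ` (Pc i ` {..<k}) = Pc i ` {..<k}"
proof -
  assume i: "i < m"
  have "cmp g2.H (h (Sp i)) (h (Pc i (g1.rt i))) = h ` cmp g1.H (Sp i) (Pc i (g1.rt i))"
    using t_cmp i g1.proot by simp
  then show ?thesis using h_Sp[OF i] h_root[OF i] g1.cmp_piece[OF i] g2.cmp_piece[OF i] by simp
qed

definition gi :: "nat \<Rightarrow> nat \<Rightarrow> nat" where
  "gi i z = (case h (Pc i z) of Pc _ y \<Rightarrow> y | _ \<Rightarrow> 0)"

lemma gi: "i < m \<Longrightarrow> z < k \<Longrightarrow> h (Pc i z) = Pc i (gi i z) \<and> gi i z < k"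
proof -
  assume i: "i < m" and z: "z < k"
  have "h (Pc i z) \<in> Pc i ` {..<k}" using h_piece[OF i] z by blast
  then obtain y where "h (Pc i z) = Pc i y" "y < k" by blast
  then show ?thesis unfolding gi_def by simp
qed

lemma gi_bij: "i < m \<Longrightarrow> bij_betw (gi i) {..<k} {..<k}"
proof -
  assume i: "i < m"
  have "inj_on (gi i) {..<k}"
  proof (rule inj_onI)
    fix x y assume xy: "x \<in> {..<k}" "y \<in> {..<k}" "gi i x = gi i y"
    then have "h (Pc i x) = h (Pc i y)" using gi[OF i] by (metis lessThan_iff)
    then have "Pc i x = Pc i y" using hinj i xy by (simp add: inj_on_eq_iff)
    then show "x = y" by simp
  qed
  moreover have "gi i ` {..<k} = {..<k}"
  proof
    show "gi i ` {..<k} \<subseteq> {..<k}" using gi[OF i] by auto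
    show "{..<k} \<subseteq> gi i ` {..<k}"
    proof
      fix y assume y: "y \<in> {..<k}"
      then have "Pc i y \<in> h ` (Pc i ` {..<k})" using h_piece[OF i] by blast
      then obtain z where z: "z < k" "Pc i y = h (Pc i z)" by blast
      then have "y = gi i z" using gi[OF i z(1)] by simp
      then show "y \<in> gi i ` {..<k}" using z by blast
    qed
  qed
  ultimately show ?thesis unfolding bij_betw_def by blast
qed

lemma gi_edges: "i < m \<Longrightarrow> g2.Ei i = (\<lambda>e. gi i ` e) ` g1.Ei i"
proof -
  assume i: "i < m"
  show ?thesis
  proof
    show "(\<lambda>e. gi i ` e) ` g1.Ei i \<subseteq> g2.Ei i"
    proof
      fix e' assume "e' \<in> (\<lambda>e. gi i ` e) ` g1.Ei i"
      then obtain e where e: "e \<in> g1.Ei i" "e' = gi i ` e" by blast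
      have "e \<in> vpairs k" using g1.ptree[OF i] e(1) unfolding is_tree_def by blast
      then obtain x y where xy: "e = {x, y}" "x < k" "y < k" unfolding vpairs_def by blast
      have "{Pc i x, Pc i y} \<in> g1.H" using g1.H_Pc[of i x "Pc i y"] i e(1) xy(1) by auto
      then have "{h (Pc i x), h (Pc i y)} \<in> g2.H" using t_edge i xy by simp
      then have "{Pc i (gi i x), Pc i (gi i y)} \<in> g2.H" using gi[OF i] xy by simp
      then have "{gi i x, gi i y} \<in> g2.Ei i" using g2.H_Pc[of i "gi i x"] by auto
      then show "e' \<in> g2.Ei i" using e xy by simp
    qed
  next
    show "g2.Ei i \<subseteq> (\<lambda>e. gi i ` e) ` g1.Ei i"
    proof
      fix e' assume e': "e' \<in> g2.Ei i"
      have "e' \<in> vpairs k" using g2.ptree[OF i] e' unfolding is_tree_def by blast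
      then obtain x' y' where xy': "e' = {x', y'}" "x' < k" "y' < k" unfolding vpairs_def by blast
      obtain x where x: "x < k" "x' = gi i x" using gi_bij[OF i] xy'(2) unfolding bij_betw_def by (metis imageE lessThan_iff)
      obtain y where y: "y < k" "y' = gi i y" using gi_bij[OF i] xy'(3) unfolding bij_betw_def by (metis imageE lessThan_iff)
      have "{Pc i x', Pc i y'} \<in> g2.H" using g2.H_Pc[of i x' "Pc i y'"] i e' xy'(1) by auto
      then have "{h (Pc i x), h (Pc i y)} \<in> g2.H" using gi[OF i] x y by simp
      then have "{Pc i x, Pc i y} \<in> g1.H" using t_edge i x y by simp
      then have "{x, y} \<in> g1.Ei i" using g1.H_Pc[of i x] by auto
      moreover have "e' = gi i ` {x, y}" using xy'(1) x y by simp
      ultimately show "e' \<in> (\<lambda>e. gi i ` e) ` g1.Ei i" by (rule rev_image_eqI)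
    qed
  qed
qed

lemma gi_root: "i < m \<Longrightarrow> gi i (g1.rt i) = g2.rt i"
proof -
  assume i: "i < m"
  have "h (Pc i (g1.rt i)) = Pc i (gi i (g1.rt i))" using gi[OF i g1.proot[OF i]] by simp
  then show ?thesis using h_root[OF i] by simp
qed

end


fun num :: "nat \<Rightarrow> nat \<Rightarrow> vtx \<Rightarrow> nat" where
  "num k m (Sp i) = i * (k + 2)"
| "num k m (Lf i) = i * (k + 2) + 1"
| "num k m (Pc i x) = i * (k + 2) + 2 + x"
| "num k m (Ex j) = m * (k + 2) + j"

lemma enc_inj:
  fixes b :: nat
  assumes "t < b" "u < b" "i * b + t = j * b + u"
  shows "i = j \<and> t = u"
proof -
  have "(i * b + t) div b = i" "(j * b + u) div b = j" using assms(1,2) by simp_all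
  moreover have "(i * b + t) mod b = t" "(j * b + u) mod b = u" using assms(1,2) by simp_all
  ultimately show ?thesis using assms(3) by metis
qed

lemma enc_less:
  fixes b :: nat
  assumes "i < m" "t < b"
  shows "i * b + t < m * b"
proof -
  have "Suc i \<le> m" using assms(1) by simp
  then have "Suc i * b \<le> m * b" by (rule mult_right_mono) simp
  then show ?thesis using assms(2) by simp
qed

context glue
begin

definition n where "n = m * (k + 2) + c"

definition G where "G = relabel (num k m) H"

lemma num_inj: "inj_on (num k m) V"
proof (rule inj_onI)
  fix x y assume x: "x \<in> V" and y: "y \<in> V" and eq: "num k m x = num k m y"
  show "x = y"
  proof (cases x)
    case (Sp i)
    show ?thesis
    proof (cases y)
      case (Sp j) then show ?thesis using \<open>x = Sp i\<close> eq enc_inj[of 0 "k+2" 0 i j] by simp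
    next
      case (Lf j) then show ?thesis using \<open>x = Sp i\<close> eq enc_inj[of 0 "k+2" 1 i j] by simp
    next
      case (Pc j z) then show ?thesis using \<open>x = Sp i\<close> y eq enc_inj[of 0 "k+2" "2+z" i j] by (simp add: add.assoc)
    next
      case (Ex j) then show ?thesis using \<open>x = Sp i\<close> x eq enc_less[of i m 0 "k+2"] by simp
    qed
  next
    case (Lf i)
    show ?thesis
    proof (cases y)
      case (Sp j) then show ?thesis using \<open>x = Lf i\<close> eq enc_inj[of 1 "k+2" 0 i j] by simp
    next
      case (Lf j) then show ?thesis using \<open>x = Lf i\<close> eq enc_inj[of 1 "k+2" 1 i j] by simp
    next
      case (Pc j z) then show ?thesis using \<open>x = Lf i\<close> y eq enc_inj[of 1 "k+2" "2+z" i j] by (simp add: add.assoc)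
    next
      case (Ex j) then show ?thesis using \<open>x = Lf i\<close> x eq enc_less[of i m 1 "k+2"] by simp
    qed
  next
    case (Pc i z)
    have z: "2 + z < k + 2" using x Pc by simp
    show ?thesis
    proof (cases y)
      case (Sp j) then show ?thesis using \<open>x = Pc i z\<close> z eq enc_inj[of "2+z" "k+2" 0 i j] by (simp add: add.assoc)
    next
      case (Lf j) then show ?thesis using \<open>x = Pc i z\<close> z eq enc_inj[of "2+z" "k+2" 1 i j] by (simp add: add.assoc)
    next
      case (Pc j w) then show ?thesis using \<open>x = Pc i z\<close> y z eq enc_inj[of "2+z" "k+2" "2+w" i j] by (simp add: add.assoc)
    next
      case (Ex j) then show ?thesis using \<open>x = Pc i z\<close> x z eq enc_less[of i m "2+z" "k+2"] by (simp add: add.assoc)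
    qed
  next
    case (Ex i)
    show ?thesis
    proof (cases y)
      case (Sp j) then show ?thesis using \<open>x = Ex i\<close> y eq enc_less[of j m 0 "k+2"] by simp
    next
      case (Lf j) then show ?thesis using \<open>x = Ex i\<close> y eq enc_less[of j m 1 "k+2"] by simp
    next
      case (Pc j w) then show ?thesis using \<open>x = Ex i\<close> y eq enc_less[of j m "2+w" "k+2"] by (simp add: add.assoc)
    next
      case (Ex j) then show ?thesis using \<open>x = Ex i\<close> eq by simp
    qed
  qed
qed

lemma num_img: "num k m ` V = {..<n}"
proof
  show "num k m ` V \<subseteq> {..<n}"
  proof
    fix y assume "y \<in> num k m ` V"
    then obtain x where x: "x \<in> V" "y = num k m x" by blast
    show "y \<in> {..<n}"
    proof (cases x)
      case (Sp i) then show ?thesis using x enc_less[of i m 0 "k+2"] unfolding n_def by simp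
    next
      case (Lf i) then show ?thesis using x enc_less[of i m 1 "k+2"] unfolding n_def by simp
    next
      case (Pc i z) then show ?thesis using x enc_less[of i m "2+z" "k+2"] unfolding n_def by (simp add: add.assoc)
    next
      case (Ex j) then show ?thesis using x unfolding n_def by simp
    qed
  qed
  show "{..<n} \<subseteq> num k m ` V"
  proof
    fix y assume y: "y \<in> {..<n}"
    show "y \<in> num k m ` V"
    proof (cases "y < m * (k + 2)")
      case True
      define i where "i = y div (k + 2)"
      define t where "t = y mod (k + 2)"
      have yi: "y = i * (k + 2) + t" unfolding i_def t_def by (rule div_mult_mod_eq[symmetric])
      have t: "t < k + 2" unfolding t_def by simp
      have i: "i < m" unfolding i_def using True by (simp add: div_less_iff_less_mult)
      consider "t = 0" | "t = 1" | "2 \<le> t" by linarith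
      then show ?thesis
      proof cases
        case 1 then have "y = num k m (Sp i)" using yi by simp
        then show ?thesis using i by (metis V_simps(1) image_eqI)
      next
        case 2 then have "y = num k m (Lf i)" using yi by simp
        then show ?thesis using i by (metis V_simps(2) image_eqI)
      next
        case 3 then have "y = num k m (Pc i (t - 2))" using yi by simp
        moreover have "Pc i (t - 2) \<in> V" using i t 3 by simp
        ultimately show ?thesis by blast
      qed
    next
      case False
      then have "y = num k m (Ex (y - m * (k + 2)))" by simp
      moreover have "Ex (y - m * (k + 2)) \<in> V" using y False unfolding n_def by simp
      ultimately show ?thesis by blast
    qed
  qed
qed

lemma edges_G: "edges_in {..<n} G"
  using edges_in_relabel[OF num_inj edges_in_H] num_img unfolding G_def by simp

lemma G_vpairs: "G \<subseteq> vpairs n"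
proof
  fix e assume "e \<in> G"
  then obtain a b where "a \<in> {..<n}" "b \<in> {..<n}" "a \<noteq> b" "e = {a, b}"
    using edges_G unfolding edges_in_def by blast
  then show "e \<in> vpairs n" unfolding vpairs_def by blast
qed

lemma relabel_minus:
  assumes "e \<in> H"
  shows "G - {num k m ` e} = relabel (num k m) (H - {e})"
proof -
  have sub: "\<And>e. e \<in> H \<Longrightarrow> e \<subseteq> V" using edge_sub_W[OF edges_in_H] by blast
  have injE: "\<And>e1 e2. e1 \<in> H \<Longrightarrow> e2 \<in> H \<Longrightarrow> num k m ` e1 = num k m ` e2 \<Longrightarrow> e1 = e2"
    using sub num_inj by (meson inj_on_image_eq_iff)
  show ?thesis
    unfolding G_def relabel_def using injE assms by blast
qed

lemma tree_G: "is_tree n G"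
  unfolding is_tree_def
proof (intro conjI ballI)
  show "1 \<le> n" unfolding n_def using c2 by simp
  show "G \<subseteq> vpairs n" by (rule G_vpairs)
  show "connected_on n G"
    unfolding conn_alt G_def using conn_relabel[OF num_inj edges_in_H] num_img conn_H by simp
next
  fix e' assume "e' \<in> G"
  then obtain e where e: "e \<in> H" "e' = num k m ` e" unfolding G_def relabel_def by blast
  have ed: "edges_in V (H - {e})" using edges_in_H unfolding edges_in_def by blast
  have "\<not> conn V (H - {e})" using bridge_H[OF e(1)] .
  then have "\<not> conn {..<n} (relabel (num k m) (H - {e}))"
    using conn_relabel[OF num_inj ed] num_img by simp
  then show "\<not> connected_on n (G - {e'})" unfolding conn_alt using relabel_minus[OF e(1)] e(2) by simp
qed

lemma degree_G: "v \<in> V \<Longrightarrow> degree G (num k m v) = dg H v"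
  unfolding degree_dg G_def using dg_relabel[OF num_inj edges_in_H] by simp

lemma maxdeg_G: "max_degree n G \<le> k + c + 4"
  unfolding max_degree_def
proof (subst Max_le_iff)
  show "finite (degree G ` {..<n})" by simp
  have "0 \<in> {..<n}" unfolding n_def using c2 by simp
  then show "degree G ` {..<n} \<noteq> {}" by blast
  show "\<forall>a\<in>degree G ` {..<n}. a \<le> k + c + 4"
  proof
    fix a assume "a \<in> degree G ` {..<n}"
    then obtain y where y: "y \<in> {..<n}" "a = degree G y" by blast
    then obtain v where v: "v \<in> V" "y = num k m v" using num_img by blast
    then show "a \<le> k + c + 4" using y degree_G dg_bound by simp
  qed
qed

lemma leaves_G: "m + c \<le> card (leaves n G)"
proof -
  let ?S = "Lf ` {..<m} \<union> Ex ` {..<c}"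
  have SV: "?S \<subseteq> V" by auto
  have "num k m ` ?S \<subseteq> leaves n G"
  proof
    fix y assume "y \<in> num k m ` ?S"
    then obtain v where v: "v \<in> ?S" "y = num k m v" by blast
    then have "v \<in> V" using SV by blast
    moreover have "dg H v = 1" using v(1) dg_Lf dg_Ex by auto
    ultimately show "y \<in> leaves n G" unfolding leaves_def using v(2) degree_G num_img by auto
  qed
  moreover have "finite (leaves n G)" unfolding leaves_def by simp
  ultimately have "card (num k m ` ?S) \<le> card (leaves n G)" by (rule card_mono[rotated])
  moreover have "card (num k m ` ?S) = card ?S"
    using inj_on_subset[OF num_inj SV] by (rule card_image)
  moreover have "card ?S = m + c"
  proof -
    have "card ?S = card (Lf ` {..<m}) + card (Ex ` {..<c})" by (rule card_Un_disjoint) auto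
    also have "\<dots> = m + c" by (simp add: card_image inj_on_def)
    finally show ?thesis .
  qed
  ultimately show ?thesis by simp
qed

end


locale gpair = g1: glue k m c p + g2: glue k m c p' for k m c p p'
begin

lemma nn: "g2.n = g1.n" by (simp add: g1.n_def g2.n_def)
lemma VV': "g2.V = g1.V" by (simp add: g1.V_def g2.V_def)

lemma iso_pieces:
  assumes f: "bij_betw f {..<g1.n} {..<g1.n}"
    and eq: "g2.G = relabel f g1.G"
    and i: "i < m"
  shows "\<exists>g. bij_betw g {..<k} {..<k} \<and> fst (p' i) = (\<lambda>e. g ` e) ` fst (p i) \<and> g (snd (p i)) = snd (p' i)"
proof -
  let ?num = "num k m"
  let ?inv = "inv_into g1.V ?num"
  define h where "h = ?inv \<circ> (f \<circ> ?num)"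
  have bn: "bij_betw ?num g1.V {..<g1.n}" using g1.num_inj g1.num_img unfolding bij_betw_def by blast
  have bi: "bij_betw ?inv {..<g1.n} g1.V" using bij_betw_inv_into[OF bn] .
  have b1: "bij_betw (f \<circ> ?num) g1.V {..<g1.n}" by (rule bij_betw_trans[OF bn f])
  have b2: "bij_betw (?inv \<circ> (f \<circ> ?num)) g1.V g1.V" by (rule bij_betw_trans[OF b1 bi])
  have hb: "bij_betw h g1.V g2.V" unfolding h_def by (rule b2)
  have "g2.H = relabel ?inv (relabel ?num g2.H)"
    using relabel_inv[OF g2.num_inj g2.edges_in_H] by simp
  also have "\<dots> = relabel ?inv (relabel f (relabel ?num g1.H))"
    using eq unfolding g1.G_def g2.G_def by simp
  also have "\<dots> = relabel h g1.H" unfolding h_def by (simp add: relabel_comp)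
  finally have hH: "g2.H = relabel h g1.H" .
  interpret gg: glue2 k m c p p' h
    by (rule glue2.intro, unfold_locales) (use hb hH in auto)
  show ?thesis using gg.gi_bij[OF i] gg.gi_edges[OF i] gg.gi_root[OF i] by blast
qed

end


lemma vpairs_edges_in: "E \<subseteq> vpairs n \<Longrightarrow> edges_in {..<n} E"
  unfolding edges_in_def vpairs_def by blast

definition Ar :: "nat \<Rightarrow> (nat set set \<times> nat) set" where
  "Ar k = {(E, r). is_tree k E \<and> r < k}"

lemma rooted_iso_iff:
  "((E, r), (E', r')) \<in> rooted_iso k A \<longleftrightarrow> (E, r) \<in> A \<and> (E', r') \<in> A \<and>
     (\<exists>f. bij_betw f {..<k} {..<k} \<and> E' = relabel f E \<and> f r = r')"
  unfolding rooted_iso_def relabel_def by simp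

lemma rooted_isoI:
  assumes "(E, r) \<in> A" "(E', r') \<in> A" "bij_betw f {..<k} {..<k}" "E' = relabel f E" "f r = r'"
  shows "((E, r), (E', r')) \<in> rooted_iso k A"
  unfolding rooted_iso_iff using assms by (intro conjI exI[of _ f]) simp_all

lemma rooted_isoE:
  assumes "((E, r), (E', r')) \<in> rooted_iso k A"
  obtains f where "(E, r) \<in> A" "(E', r') \<in> A" "bij_betw f {..<k} {..<k}" "E' = relabel f E" "f r = r'"
  using assms unfolding rooted_iso_iff by blast

lemma rooted_equiv: "equiv (Ar k) (rooted_iso k (Ar k))"
  unfolding equiv_def
proof (intro conjI)
  show "rooted_iso k (Ar k) \<subseteq> Ar k \<times> Ar k" unfolding rooted_iso_def by auto
next
  show "refl_on (Ar k) (rooted_iso k (Ar k))"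
  proof (rule refl_onI)
    fix x assume x: "x \<in> Ar k"
    obtain E r where xe: "x = (E, r)" by (metis surj_pair)
    have "bij_betw id {..<k} {..<k}" by simp
    moreover have "E = relabel id E" by (simp add: relabel_id)
    ultimately have "((E, r), (E, r)) \<in> rooted_iso k (Ar k)" using x xe by (intro rooted_isoI[where f=id]) simp_all
    then show "(x, x) \<in> rooted_iso k (Ar k)" using xe by simp
  qed
next
  show "sym (rooted_iso k (Ar k))"
  proof (rule symI)
    fix x y assume xy: "(x, y) \<in> rooted_iso k (Ar k)"
    obtain E r E' r' where e: "x = (E, r)" "y = (E', r')" by (metis surj_pair)
    then have xy': "((E, r), (E', r')) \<in> rooted_iso k (Ar k)" using xy by simp
    obtain f where f: "(E, r) \<in> Ar k" "(E', r') \<in> Ar k" "bij_betw f {..<k} {..<k}" "E' = relabel f E" "f r = r'"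
      using rooted_isoE[OF xy'] by metis
    let ?g = "inv_into {..<k} f"
    have ed: "edges_in {..<k} E" using f(1) vpairs_edges_in unfolding Ar_def is_tree_def by blast
    have inj: "inj_on f {..<k}" using f(3) bij_betw_def by blast
    have "bij_betw ?g {..<k} {..<k}" using bij_betw_inv_into[OF f(3)] .
    moreover have "E = relabel ?g E'" using relabel_inv[OF inj ed] f(4) by simp
    moreover have "?g r' = r" using f(1,5) inj unfolding Ar_def by auto
    ultimately have "((E', r'), (E, r)) \<in> rooted_iso k (Ar k)" using f(1,2) by (intro rooted_isoI)
    then show "(y, x) \<in> rooted_iso k (Ar k)" using e by simp
  qed
next
  show "trans (rooted_iso k (Ar k))"
  proof (rule transI)
    fix x y z assume xy: "(x, y) \<in> rooted_iso k (Ar k)" and yz: "(y, z) \<in> rooted_iso k (Ar k)"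
    obtain E r E' r' E'' r'' where e: "x = (E, r)" "y = (E', r')" "z = (E'', r'')" by (metis surj_pair)
    have xy': "((E, r), (E', r')) \<in> rooted_iso k (Ar k)" using xy e by simp
    have yz': "((E', r'), (E'', r'')) \<in> rooted_iso k (Ar k)" using yz e by simp
    obtain f where f: "(E, r) \<in> Ar k" "(E', r') \<in> Ar k" "bij_betw f {..<k} {..<k}" "E' = relabel f E" "f r = r'"
      using rooted_isoE[OF xy'] by metis
    obtain g where g: "(E', r') \<in> Ar k" "(E'', r'') \<in> Ar k" "bij_betw g {..<k} {..<k}" "E'' = relabel g E'" "g r' = r''"
      using rooted_isoE[OF yz'] by metis
    have "bij_betw (g \<circ> f) {..<k} {..<k}" using bij_betw_trans[OF f(3) g(3)] .
    moreover have "E'' = relabel (g \<circ> f) E" using f(4) g(4) by (simp add: relabel_comp)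
    moreover have "(g \<circ> f) r = r''" using f(5) g(5) by simp
    ultimately have "((E, r), (E'', r'')) \<in> rooted_iso k (Ar k)" using f(1) g(2) by (intro rooted_isoI)
    then show "(x, z) \<in> rooted_iso k (Ar k)" using e by simp
  qed
qed

lemma finite_vpairs: "finite (vpairs n)"
proof -
  have "vpairs n \<subseteq> Pow {..<n}" unfolding vpairs_def by auto
  then show ?thesis by (rule finite_subset) simp
qed

lemma finite_trees: "finite {E. is_tree n E \<and> P E}"
proof -
  have "{E. is_tree n E \<and> P E} \<subseteq> Pow (vpairs n)" unfolding is_tree_def by auto
  then show ?thesis by (rule finite_subset) (simp add: finite_vpairs)
qed

lemma finite_Ar: "finite (Ar k)"
proof -
  have "Ar k \<subseteq> Pow (vpairs k) \<times> {..<k}" unfolding Ar_def is_tree_def by auto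
  then show ?thesis by (rule finite_subset) (simp add: finite_vpairs)
qed

definition rep :: "'a set \<Rightarrow> 'a" where "rep C = (SOME x. x \<in> C)"

lemma rep_in:
  assumes "equiv A R" "C \<in> A // R" shows "rep C \<in> C"
proof -
  have "C \<noteq> {}" using in_quotient_imp_non_empty[OF assms] .
  then obtain x where "x \<in> C" by blast
  then show ?thesis unfolding rep_def by (rule someI)
qed

lemma class_rep:
  assumes "equiv A R" "C \<in> A // R" shows "C = R `` {rep C}"
proof -
  obtain a where a: "C = R `` {a}" "a \<in> A" using assms(2) by (rule quotientE)
  have "rep C \<in> C" using rep_in[OF assms] .
  then have "(a, rep C) \<in> R" using a by simp
  then have "R `` {a} = R `` {rep C}" by (rule equiv_class_eq[OF assms(1)])
  then show ?thesis using a(1) by simp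
qed

lemma rep_unique:
  assumes "equiv A R" "C \<in> A // R" "C' \<in> A // R" "(rep C, rep C') \<in> R"
  shows "rep C = rep C'"
proof -
  have "R `` {rep C} = R `` {rep C'}" using equiv_class_eq[OF assms(1,4)] .
  then have "C = C'" using class_rep[OF assms(1,2), symmetric] class_rep[OF assms(1,3), symmetric] by (rule box_equals)
  then show ?thesis by simp
qed

lemma rep_inj:
  assumes "equiv A R" shows "inj_on rep (A // R)"
proof (rule inj_onI)
  fix C C' assume C: "C \<in> A // R" "C' \<in> A // R" "rep C = rep C'"
  have "rep C \<in> A" using rep_in[OF assms C(1)] in_quotient_imp_subset[OF assms C(1)] by blast
  moreover have "refl_on A R" using assms by (simp add: equiv_def)
  ultimately have "(rep C, rep C) \<in> R" by (simp add: refl_onD)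
  then have "(rep C, rep C') \<in> R" using C(3) by simp
  then have "R `` {rep C} = R `` {rep C'}" using equiv_class_eq[OF assms] by simp
  then show "C = C'" using class_rep[OF assms C(1), symmetric] class_rep[OF assms C(2), symmetric] by (rule box_equals)
qed

lemma count_lower:
  fixes k m c n \<Delta> :: nat and \<rho> :: real
  assumes k2: "2 \<le> k" and m2: "2 \<le> m" and c2: "2 \<le> c" and nd: "n = m * (k + 2) + c"
    and D: "k + c + 4 \<le> \<Delta>" and rho: "\<rho> * real n \<le> real (m + c)"
  shows "rooted_trees k ^ m \<le> unlabelled_trees n (\<lambda>E. max_degree n E \<le> \<Delta> \<and> \<rho> * real n \<le> real (card (leaves n E)))"
proof -
  define R where "R = rooted_iso k (Ar k)"
  define Q where "Q = Ar k // R"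
  define Reps where "Reps = rep ` Q"
  have eq: "equiv (Ar k) R" using rooted_equiv R_def by simp
  have rt: "rooted_trees k = card Q" unfolding rooted_trees_def Q_def R_def Ar_def Let_def by simp
  have Rsub: "R \<subseteq> Ar k \<times> Ar k" using eq unfolding equiv_def by blast
  have finQ: "finite Q" unfolding Q_def using finite_quotient[OF finite_Ar Rsub] .
  have cardReps: "card Reps = card Q" unfolding Reps_def Q_def using card_image[OF rep_inj[OF eq]] .
  have finReps: "finite Reps" using finQ Reps_def by simp
  have RepsA: "Reps \<subseteq> Ar k"
  proof
    fix x assume "x \<in> Reps"
    then obtain C where C: "C \<in> Q" "x = rep C" unfolding Reps_def by blast
    then show "x \<in> Ar k" using rep_in[OF eq] in_quotient_imp_subset[OF eq] unfolding Q_def by blast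
  qed
  define P where "P = (\<lambda>E. max_degree n E \<le> \<Delta> \<and> \<rho> * real n \<le> real (card (leaves n E)))"
  define Au where "Au = {E. is_tree n E \<and> P E}"
  define Ru where "Ru = graph_iso n Au"
  have ut: "unlabelled_trees n P = card (Au // Ru)" unfolding unlabelled_trees_def Au_def Ru_def Let_def by simp
  define Ls where "Ls = {xs. set xs \<subseteq> Reps \<and> length xs = m}"
  define Gx where "Gx = (\<lambda>xs. glue.G k m c (\<lambda>i. xs ! i))"
  have nthA: "xs ! i \<in> Ar k" if "xs \<in> Ls" "i < m" for xs i
  proof -
    have "xs ! i \<in> set xs" using that unfolding Ls_def by simp
    then show ?thesis using that RepsA unfolding Ls_def by blast
  qed
  have gl: "glue k m c (\<lambda>i. xs ! i)" if "xs \<in> Ls" for xs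
  proof
    show "2 \<le> k" "2 \<le> m" "2 \<le> c" using k2 m2 c2 by simp_all
  next
    fix i assume "i < m"
    then have "xs ! i \<in> Ar k" using nthA that by blast
    then show "is_tree k (fst (xs ! i))" "snd (xs ! i) < k" unfolding Ar_def by auto
  qed
  have inAu: "Gx xs \<in> Au" if "xs \<in> Ls" for xs
  proof -
    interpret glue k m c "\<lambda>i. xs ! i" using gl[OF that] .
    have nn: "n = glue.n k m c" using nd n_def by simp
    have "is_tree n (Gx xs)" using tree_G nn unfolding Gx_def by simp
    moreover have "max_degree n (Gx xs) \<le> \<Delta>" using maxdeg_G nn D unfolding Gx_def by simp
    moreover have "\<rho> * real n \<le> real (card (leaves n (Gx xs)))"
    proof -
      have "m + c \<le> card (leaves n (Gx xs))" using leaves_G nn unfolding Gx_def by simp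
      then show ?thesis using rho by linarith
    qed
    ultimately show ?thesis unfolding Au_def P_def by simp
  qed
  have self: "(E, E) \<in> Ru" if "E \<in> Au" for E
  proof -
    have "bij_betw id {..<n} {..<n}" by simp
    moreover have "E = (\<lambda>e. id ` e) ` E" by simp
    ultimately show ?thesis unfolding Ru_def graph_iso_def using that by blast
  qed
  define \<Phi> where "\<Phi> = (\<lambda>xs. Ru `` {Gx xs})"
  have inj: "inj_on \<Phi> Ls"
  proof (rule inj_onI)
    fix xs ys assume xs: "xs \<in> Ls" and ys: "ys \<in> Ls" and e: "\<Phi> xs = \<Phi> ys"
    have "Gx ys \<in> \<Phi> ys" unfolding \<Phi>_def using self[OF inAu[OF ys]] by simp
    then have "Gx ys \<in> \<Phi> xs" using e by simp
    then have "(Gx xs, Gx ys) \<in> Ru" unfolding \<Phi>_def by (rule ImageE) simp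
    then obtain f where f: "bij_betw f {..<n} {..<n}" "Gx ys = (\<lambda>e. f ` e) ` Gx xs"
      unfolding Ru_def graph_iso_def by blast
    interpret gp: gpair k m c "\<lambda>i. xs ! i" "\<lambda>i. ys ! i"
      by (rule gpair.intro) (rule gl[OF xs], rule gl[OF ys])
    have nn: "gp.g1.n = n" using nd gp.g1.n_def by simp
    have same: "xs ! i = ys ! i" if i: "i < m" for i
    proof -
      have "gp.g2.G = relabel f gp.g1.G" using f(2) unfolding Gx_def relabel_def by simp
      then obtain g where g: "bij_betw g {..<k} {..<k}" "fst (ys ! i) = (\<lambda>e. g ` e) ` fst (xs ! i)"
          "g (snd (xs ! i)) = snd (ys ! i)"
        using gp.iso_pieces[of f i] f(1) nn i by auto
      obtain E r where Er: "xs ! i = (E, r)" by (metis surj_pair)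
      obtain E' r' where Er': "ys ! i = (E', r')" by (metis surj_pair)
      have "((E, r), (E', r')) \<in> R" unfolding R_def
        using nthA[OF xs i] nthA[OF ys i] Er Er' g by (intro rooted_isoI[where f=g]) (simp_all add: relabel_def)
      then have rel: "(xs ! i, ys ! i) \<in> R" using Er Er' by simp
      have "xs ! i \<in> Reps" "ys ! i \<in> Reps" using xs ys i unfolding Ls_def by auto
      then obtain C C' where C: "C \<in> Q" "xs ! i = rep C" "C' \<in> Q" "ys ! i = rep C'"
        unfolding Reps_def by blast
      show ?thesis using rep_unique[OF eq, of C C'] C rel unfolding Q_def by simp
    qed
    show "xs = ys" using xs ys same unfolding Ls_def by (intro nth_equalityI) auto
  qed
  have img: "\<Phi> ` Ls \<subseteq> Au // Ru" unfolding \<Phi>_def using inAu by (auto intro: quotientI)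
  have finU: "finite (Au // Ru)"
  proof (rule finite_quotient)
    show "finite Au" unfolding Au_def by (rule finite_trees)
    show "Ru \<subseteq> Au \<times> Au" unfolding Ru_def graph_iso_def by auto
  qed
  have cL: "card Ls = card Q ^ m" unfolding Ls_def using card_lists_length_eq[OF finReps] cardReps by simp
  have "card (\<Phi> ` Ls) = card Ls" using card_image[OF inj] .
  moreover have "card (\<Phi> ` Ls) \<le> card (Au // Ru)" using card_mono[OF finU img] .
  ultimately have "card Q ^ m \<le> card (Au // Ru)" using cL by simp
  then show ?thesis using rt ut unfolding P_def by simp
qed

lemma gamma_bound:
  fixes \<gamma> \<beta> :: real and k m c n :: nat
  assumes g0: "0 < \<gamma>" and gb: "\<gamma> < \<beta>" and pw: "\<gamma> ^ 3 < (\<beta> / \<gamma>) ^ k"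
    and nd: "n = m * (k + 2) + c" and cm: "c \<le> m"
  shows "\<gamma> ^ n \<le> \<beta> ^ (k * m)"
proof (cases "\<gamma> \<le> 1")
  case True
  have "\<gamma> ^ n \<le> \<gamma> ^ (k * m)" using True g0 nd by (intro power_decreasing) (auto simp: algebra_simps)
  also have "\<dots> \<le> \<beta> ^ (k * m)" using g0 gb by (intro power_mono) auto
  finally show ?thesis .
next
  case False
  have n2: "n = k * m + (2 * m + c)" using nd by (simp add: algebra_simps)
  have "\<gamma> ^ n = \<gamma> ^ (k * m) * \<gamma> ^ (2 * m + c)" unfolding n2 by (rule power_add)
  also have "\<dots> \<le> \<gamma> ^ (k * m) * \<gamma> ^ (3 * m)"
  proof (rule mult_left_mono)
    show "\<gamma> ^ (2 * m + c) \<le> \<gamma> ^ (3 * m)" using False cm by (intro power_increasing) auto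
    show "0 \<le> \<gamma> ^ (k * m)" using g0 by simp
  qed
  also have "\<dots> \<le> \<gamma> ^ (k * m) * (\<beta> / \<gamma>) ^ (k * m)"
  proof (rule mult_left_mono)
    have "\<gamma> ^ (3 * m) = (\<gamma> ^ 3) ^ m" by (simp add: power_mult)
    also have "\<dots> \<le> ((\<beta> / \<gamma>) ^ k) ^ m" using pw g0 by (intro power_mono) auto
    also have "\<dots> = (\<beta> / \<gamma>) ^ (k * m)" by (simp add: power_mult)
    finally show "\<gamma> ^ (3 * m) \<le> (\<beta> / \<gamma>) ^ (k * m)" .
    show "0 \<le> \<gamma> ^ (k * m)" using g0 by simp
  qed
  also have "\<dots> = \<beta> ^ (k * m)" using g0 by (simp add: power_mult_distrib[symmetric])
  finally show ?thesis .
qed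

theorem lemma2p3:
  fixes \<alpha> \<epsilon> :: real
  assumes otter: "(\<lambda>k. root k (real (rooted_trees k))) \<longlonglongrightarrow> \<alpha>"
    and "0 < \<epsilon>" and "\<epsilon> < \<alpha>"
  shows "\<exists>\<Delta>::nat. \<exists>\<rho>::real. \<rho> > 0 \<and>
           (\<forall>\<^sub>F n in sequentially.
              real (unlabelled_trees n
                 (\<lambda>E. max_degree n E \<le> \<Delta> \<and> real (card (leaves n E)) \<ge> \<rho> * real n))
              \<ge> (\<alpha> - \<epsilon>) ^ n)"
proof -
  define \<gamma> where "\<gamma> = \<alpha> - \<epsilon>"
  define \<beta> where "\<beta> = \<alpha> - \<epsilon> / 2"
  have g0: "0 < \<gamma>" and gb: "\<gamma> < \<beta>" and ba: "\<beta> < \<alpha>"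
    using assms(2,3) unfolding \<gamma>_def \<beta>_def by auto
  have ev1: "\<forall>\<^sub>F k in sequentially. \<beta> < root k (real (rooted_trees k))"
    using order_tendstoD(1)[OF otter ba] .
  have bg1: "1 < \<beta> / \<gamma>" using g0 gb by simp
  obtain N where N: "\<gamma> ^ 3 < (\<beta> / \<gamma>) ^ N" using real_arch_pow[OF bg1] by blast
  have ev2: "\<forall>\<^sub>F k in sequentially. \<gamma> ^ 3 < (\<beta> / \<gamma>) ^ k"
    unfolding eventually_sequentially
  proof (intro exI allI impI)
    fix k assume "N \<le> k"
    then have "(\<beta> / \<gamma>) ^ N \<le> (\<beta> / \<gamma>) ^ k" using bg1 by (intro power_increasing) auto
    then show "\<gamma> ^ 3 < (\<beta> / \<gamma>) ^ k" using N by linarith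
  qed
  have ev3: "\<forall>\<^sub>F k in sequentially. 2 \<le> k" by (rule eventually_ge_at_top)
  have "\<forall>\<^sub>F k in sequentially. \<beta> < root k (real (rooted_trees k)) \<and> \<gamma> ^ 3 < (\<beta> / \<gamma>) ^ k \<and> 2 \<le> k"
    by (rule eventually_conj[OF ev1 eventually_conj[OF ev2 ev3]])
  then obtain k where k: "\<beta> < root k (real (rooted_trees k))" "\<gamma> ^ 3 < (\<beta> / \<gamma>) ^ k" "2 \<le> k"
    unfolding eventually_sequentially by blast
  define a where "a = rooted_trees k"
  have aB: "\<beta> ^ k \<le> real a"
  proof -
    have "real a = root k (real a) ^ k" using k(3) by (simp add: real_root_pow_pos2)
    moreover have "\<beta> ^ k \<le> root k (real a) ^ k" using k(1) g0 gb unfolding a_def by (intro power_mono) auto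
    ultimately show ?thesis by simp
  qed
  define \<Delta> where "\<Delta> = 2 * k + 8"
  define \<rho> where "\<rho> = 1 / real (k + 2)"
  have "\<forall>\<^sub>F n in sequentially.
              real (unlabelled_trees n
                 (\<lambda>E. max_degree n E \<le> \<Delta> \<and> real (card (leaves n E)) \<ge> \<rho> * real n))
              \<ge> (\<alpha> - \<epsilon>) ^ n"
    unfolding eventually_sequentially
  proof (intro exI allI impI)
    fix n assume nN: "(k + 3) * (k + 2) + 2 \<le> n"
    define m where "m = (n - 2) div (k + 2)"
    define c where "c = (n - 2) mod (k + 2) + 2"
    have nd: "n = m * (k + 2) + c"
    proof -
      have "n - 2 = m * (k + 2) + (n - 2) mod (k + 2)" unfolding m_def by (rule div_mult_mod_eq[symmetric])
      then show ?thesis unfolding c_def using nN by linarith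
    qed
    have mk: "k + 3 \<le> m"
    proof -
      have "(k + 3) * (k + 2) \<le> n - 2" using nN by linarith
      then have "(k + 3) * (k + 2) div (k + 2) \<le> (n - 2) div (k + 2)" by (rule div_le_mono)
      moreover have "(k + 3) * (k + 2) div (k + 2) = k + 3" by (rule nonzero_mult_div_cancel_right) simp
      ultimately show ?thesis unfolding m_def by simp
    qed
    have c2: "2 \<le> c" and ck: "c \<le> k + 3" unfolding c_def
      using pos_mod_bound[of "k + 2" "n - 2"] by auto
    have cnt: "rooted_trees k ^ m \<le> unlabelled_trees n (\<lambda>E. max_degree n E \<le> \<Delta> \<and> \<rho> * real n \<le> real (card (leaves n E)))"
    proof (rule count_lower)
      show "2 \<le> k" "2 \<le> m" "2 \<le> c" "n = m * (k + 2) + c" using k(3) mk c2 nd by simp_all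
      show "k + c + 4 \<le> \<Delta>" unfolding \<Delta>_def using ck by simp
      have "real n \<le> real (m + c) * real (k + 2)" using nd by (simp add: algebra_simps)
      then show "\<rho> * real n \<le> real (m + c)" unfolding \<rho>_def by (simp add: field_simps)
    qed
    have "\<gamma> ^ n \<le> \<beta> ^ (k * m)" using gamma_bound[OF g0 gb k(2) nd] mk ck by simp
    also have "\<dots> = (\<beta> ^ k) ^ m" by (simp add: power_mult)
    also have "\<dots> \<le> real a ^ m" using aB g0 gb by (intro power_mono) auto
    also have "\<dots> = real (rooted_trees k ^ m)" unfolding a_def by simp
    also have "\<dots> \<le> real (unlabelled_trees n (\<lambda>E. max_degree n E \<le> \<Delta> \<and> \<rho> * real n \<le> real (card (leaves n E))))"
      using cnt by (rule of_nat_mono)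
    finally show "(\<alpha> - \<epsilon>) ^ n \<le> real (unlabelled_trees n (\<lambda>E. max_degree n E \<le> \<Delta> \<and> \<rho> * real n \<le> real (card (leaves n E))))"
      unfolding \<gamma>_def .
  qed
  moreover have "\<rho> > 0" unfolding \<rho>_def by simp
  ultimately show ?thesis by blast
qed

end
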